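(* For every Tychonoff space $X$, the following are equivalent: (1) $C_p(X)\models S_{fin}(\Gamma_f,\Gamma_f)$ for every $f\in C_p(X)$; (2) $X\models S_{fin}(\Gamma_F,\Gamma)$; (3) $X\models S_{fin}(\Gamma_{cl},\Gamma_{cl})$ and $X$ is strongly zero-dimensional; (4) $X\models S_1(\Gamma_F,\Gamma)$.
   Context: All spaces are Tychonoff; $C_p(X)$ is $C(X)$ with pointwise convergence topology. For $y$ in a space $Y$: $\Gamma_y=\{A\subseteq Y: A$ infinite, $y\notin A$, every neighbourhood of $y$ contains all but finitely many points of $A\}$. Zero-set: $g^{-1}(0)$, $g\in C(X)$; cozero-set: its complement. A cover $\mathcal U$ of $X$ always means $X=\bigcup\mathcal U$, $X\notin\mathcal U$; $\gamma$-cover: infinite, each point in all but finitely many members. $\Gamma$: open $\gamma$-covers; $\Gamma_{cl}$: clopen $\gamma$-covers. $\Gamma_F$: $\gamma$-covers $\mathcal U$ of $X$ by cozero-sets for which there are zero-sets $F(U)\subseteq U$ ($U\in\mathcal U$) with $\{F(U):U\in\mathcal U\}$ a $\gamma$-cover of $X$. $S_1(\mathcal A,\mathcal B)$: for every sequence $(A_n)$ from $\mathcal A$ there are $b_n\in A_n$ with $\{b_n\}\in\mathcal B$; $S_{fin}(\mathcal A,\mathcal B)$: there are finite $B_n\subseteq A_n$ with $\bigcup_nB_n\in\mathcal B$. *)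

theory Defs
  imports "HOL-Analysis.Analysis"
begin

definition tychonoff_space :: "'a topology \<Rightarrow> bool" where
  "tychonoff_space X \<longleftrightarrow> completely_regular_space X \<and> t1_space X"

definition Cp :: "'a topology \<Rightarrow> ('a \<Rightarrow> real) topology" where
  "Cp X = subtopology (product_topology (\<lambda>_. euclideanreal) (topspace X))
            {f \<in> topspace X \<rightarrow>\<^sub>E UNIV. continuous_map X euclideanreal f}"

definition Gamma_pt :: "'b topology \<Rightarrow> 'b \<Rightarrow> 'b set set" where
  "Gamma_pt Y y = {A. A \<subseteq> topspace Y \<and> infinite A \<and> y \<notin> A \<and>
       (\<forall>U. openin Y U \<and> y \<in> U \<longrightarrow> finite (A - U))}"

definition zero_set :: "'a topology \<Rightarrow> 'a set \<Rightarrow> bool" where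
  "zero_set X Z \<longleftrightarrow> (\<exists>g. continuous_map X euclideanreal g \<and> Z = {x \<in> topspace X. g x = 0})"

definition cozero_set :: "'a topology \<Rightarrow> 'a set \<Rightarrow> bool" where
  "cozero_set X U \<longleftrightarrow> (\<exists>g. continuous_map X euclideanreal g \<and> U = {x \<in> topspace X. g x \<noteq> 0})"

definition is_cover :: "'a topology \<Rightarrow> 'a set set \<Rightarrow> bool" where
  "is_cover X \<U> \<longleftrightarrow> \<Union>\<U> = topspace X \<and> topspace X \<notin> \<U>"

definition gamma_cover :: "'a topology \<Rightarrow> 'a set set \<Rightarrow> bool" where
  "gamma_cover X \<U> \<longleftrightarrow> is_cover X \<U> \<and> infinite \<U> \<and>
      (\<forall>x \<in> topspace X. finite {U \<in> \<U>. x \<notin> U})"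

definition Gamma_open :: "'a topology \<Rightarrow> 'a set set set" where
  "Gamma_open X = {\<U>. gamma_cover X \<U> \<and> (\<forall>U \<in> \<U>. openin X U)}"

definition Gamma_cl :: "'a topology \<Rightarrow> 'a set set set" where
  "Gamma_cl X = {\<U>. gamma_cover X \<U> \<and> (\<forall>U \<in> \<U>. openin X U \<and> closedin X U)}"

definition Gamma_F :: "'a topology \<Rightarrow> 'a set set set" where
  "Gamma_F X = {\<U>. gamma_cover X \<U> \<and> (\<forall>U \<in> \<U>. cozero_set X U) \<and>
      (\<exists>F. (\<forall>U \<in> \<U>. zero_set X (F U) \<and> F U \<subseteq> U) \<and> gamma_cover X (F ` \<U>))}"

definition S1 :: "'b set set \<Rightarrow> 'b set set \<Rightarrow> bool" where
  "S1 \<A> \<B> \<longleftrightarrow> (\<forall>A :: nat \<Rightarrow> 'b set. (\<forall>n. A n \<in> \<A>) \<longrightarrow>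
      (\<exists>b. (\<forall>n. b n \<in> A n) \<and> range b \<in> \<B>))"

definition Sfin :: "'b set set \<Rightarrow> 'b set set \<Rightarrow> bool" where
  "Sfin \<A> \<B> \<longleftrightarrow> (\<forall>A :: nat \<Rightarrow> 'b set. (\<forall>n. A n \<in> \<A>) \<longrightarrow>
      (\<exists>B. (\<forall>n. finite (B n) \<and> B n \<subseteq> A n) \<and> (\<Union>n. B n) \<in> \<B>))"

text \<open>Strongly zero-dimensional (Engelking 6.2.4 characterisation for Tychonoff spaces):
  any two completely separated sets are separated by a clopen set.\<close>
definition strongly_zero_dimensional :: "'a topology \<Rightarrow> bool" where
  "strongly_zero_dimensional X \<longleftrightarrow>
     (\<forall>A B. A \<subseteq> topspace X \<and> B \<subseteq> topspace X \<and>
        (\<exists>f. continuous_map X (top_of_set {0..1::real}) f \<and> f ` A \<subseteq> {0} \<and> f ` B \<subseteq> {1})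
        \<longrightarrow> (\<exists>C. openin X C \<and> closedin X C \<and> A \<subseteq> C \<and> C \<inter> B = {}))"

end

theory Submission
  imports Defs
begin

section \<open>Zero and cozero sets\<close>

lemma cozero_subset: "cozero_set X U \<Longrightarrow> U \<subseteq> topspace X"
  unfolding cozero_set_def by auto

lemma zero_subset: "zero_set X U \<Longrightarrow> U \<subseteq> topspace X"
  unfolding zero_set_def by auto

lemma cozero_open: "cozero_set X U \<Longrightarrow> openin X U"
proof -
  assume "cozero_set X U"
  then obtain g where g: "continuous_map X euclideanreal g" "U = {x \<in> topspace X. g x \<noteq> 0}"
    unfolding cozero_set_def by auto
  have "openin X {x \<in> topspace X. g x \<in> - {0}}"
    by (rule openin_continuous_map_preimage[OF g(1)]) auto
  then show ?thesis using g(2) by simp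
qed

lemma cozero_lt:
  assumes "continuous_map X euclideanreal h"
  shows "cozero_set X {x \<in> topspace X. h x < c}"
  unfolding cozero_set_def
proof (intro exI conjI)
  show "continuous_map X euclideanreal (\<lambda>x. max 0 (c - h x))"
    by (intro continuous_intros assms)
  show "{x \<in> topspace X. h x < c} = {x \<in> topspace X. max 0 (c - h x) \<noteq> 0}"
    by auto
qed

lemma zero_le:
  assumes "continuous_map X euclideanreal h"
  shows "zero_set X {x \<in> topspace X. h x \<le> c}"
  unfolding zero_set_def
proof (intro exI conjI)
  show "continuous_map X euclideanreal (\<lambda>x. max 0 (h x - c))"
    by (intro continuous_intros assms)
  show "{x \<in> topspace X. h x \<le> c} = {x \<in> topspace X. max 0 (h x - c) = 0}"
    by auto
qed

lemma cozero_out: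
  assumes "continuous_map X euclideanreal h"
  shows "cozero_set X {x \<in> topspace X. h x < c \<or> d < h x}"
  unfolding cozero_set_def
proof (intro exI conjI)
  show "continuous_map X euclideanreal (\<lambda>x. max 0 (c - h x) + max 0 (h x - d))"
    by (intro continuous_intros assms)
  show "{x \<in> topspace X. h x < c \<or> d < h x} = {x \<in> topspace X. max 0 (c - h x) + max 0 (h x - d) \<noteq> 0}"
    by auto
qed

lemma zero_out:
  assumes "continuous_map X euclideanreal h"
  shows "zero_set X {x \<in> topspace X. h x \<le> c \<or> d \<le> h x}"
  unfolding zero_set_def
proof (intro exI conjI)
  show "continuous_map X euclideanreal (\<lambda>x. max 0 (h x - c) * max 0 (d - h x))"
    by (intro continuous_intros assms)
  show "{x \<in> topspace X. h x \<le> c \<or> d \<le> h x} = {x \<in> topspace X. max 0 (h x - c) * max 0 (d - h x) = 0}"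
    by (auto simp: max_def)
qed

lemma cozero_Int:
  assumes "cozero_set X U" "cozero_set X V"
  shows "cozero_set X (U \<inter> V)"
proof -
  obtain g where g: "continuous_map X euclideanreal g" "U = {x \<in> topspace X. g x \<noteq> 0}"
    using assms(1) unfolding cozero_set_def by auto
  obtain h where h: "continuous_map X euclideanreal h" "V = {x \<in> topspace X. h x \<noteq> 0}"
    using assms(2) unfolding cozero_set_def by auto
  show ?thesis unfolding cozero_set_def
    by (rule exI[of _ "\<lambda>x. g x * h x"]) (auto simp: g h intro: continuous_intros)
qed

lemma zero_Int:
  assumes "zero_set X U" "zero_set X V"
  shows "zero_set X (U \<inter> V)"
proof -
  obtain g where g: "continuous_map X euclideanreal g" "U = {x \<in> topspace X. g x = 0}"
    using assms(1) unfolding zero_set_def by auto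
  obtain h where h: "continuous_map X euclideanreal h" "V = {x \<in> topspace X. h x = 0}"
    using assms(2) unfolding zero_set_def by auto
  have "U \<inter> V = {x \<in> topspace X. \<bar>g x\<bar> + \<bar>h x\<bar> = 0}"
    using g h by auto
  then show ?thesis unfolding zero_set_def
    by (intro exI[of _ "\<lambda>x. \<bar>g x\<bar> + \<bar>h x\<bar>"] conjI continuous_intros g(1) h(1)) (auto simp: g h)
qed

lemma cozero_INT:
  fixes n :: nat
  assumes "\<And>i. cozero_set X (U i)"
  shows "cozero_set X (\<Inter>i\<in>{..n}. U i)"
proof (induction n)
  case 0 then show ?case using assms by simp
next
  case (Suc n)
  have "(\<Inter>i\<in>{..Suc n}. U i) = U (Suc n) \<inter> (\<Inter>i\<in>{..n}. U i)"
    by (simp add: atMost_Suc)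
  then show ?case using Suc assms cozero_Int by metis
qed

lemma zero_INT:
  fixes n :: nat
  assumes "\<And>i. zero_set X (U i)"
  shows "zero_set X (\<Inter>i\<in>{..n}. U i)"
proof (induction n)
  case 0 then show ?case using assms by simp
next
  case (Suc n)
  have "(\<Inter>i\<in>{..Suc n}. U i) = U (Suc n) \<inter> (\<Inter>i\<in>{..n}. U i)"
    by (simp add: atMost_Suc)
  then show ?case using Suc assms zero_Int by metis
qed

lemma clopen_zero_cozero:
  assumes "openin X U" "closedin X U"
  shows "zero_set X U \<and> cozero_set X U"
proof -
  define g where "g = (\<lambda>x. if x \<in> U then 0 else (1::real))"
  have sub: "U \<subseteq> topspace X" using assms(1) openin_subset by auto
  have cg: "continuous_map X euclideanreal g"
    unfolding continuous_map_def
  proof (intro conjI allI impI)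
    show "g \<in> topspace X \<rightarrow> topspace euclideanreal" by simp
    fix V :: "real set" assume "openin euclideanreal V"
    have eq: "{x \<in> topspace X. g x \<in> V} =
       (if 0 \<in> V then U else {}) \<union> (if 1 \<in> V then topspace X - U else {})"
      using sub by (auto simp: g_def)
    have "openin X (topspace X - U)" using assms(2) by (simp add: openin_diff)
    then show "openin X {x \<in> topspace X. g x \<in> V}"
      unfolding eq using assms(1) by auto
  qed
  have z: "zero_set X U"
    unfolding zero_set_def using sub
    by (intro exI[of _ g] conjI cg) (auto simp: g_def)
  have cg2: "continuous_map X euclideanreal (\<lambda>x. 1 - g x)"
    using cg by (intro continuous_intros)
  have c: "cozero_set X U"
    unfolding cozero_set_def using sub
    by (intro exI[of _ "\<lambda>x. 1 - g x"] conjI cg2) (auto simp: g_def)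
  show ?thesis using z c by blast
qed

lemma separating_fn:
  assumes "cozero_set X U" "zero_set X Z" "Z \<subseteq> U"
  shows "\<exists>h. continuous_map X (top_of_set {0..1::real}) h \<and> (\<forall>x\<in>Z. h x = 0) \<and>
             (\<forall>x\<in>topspace X. h x = 1 \<longleftrightarrow> x \<notin> U)"
proof -
  obtain g where g: "continuous_map X euclideanreal g" "U = {x \<in> topspace X. g x \<noteq> 0}"
    using assms(1) unfolding cozero_set_def by auto
  obtain k where k: "continuous_map X euclideanreal k" "Z = {x \<in> topspace X. k x = 0}"
    using assms(2) unfolding zero_set_def by auto
  have pos: "\<bar>k x\<bar> + \<bar>g x\<bar> > 0" if "x \<in> topspace X" for x
  proof -
    have "\<not> (k x = 0 \<and> g x = 0)" using assms(3) g k that by auto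
    then show ?thesis by auto
  qed
  define h where "h = (\<lambda>x. \<bar>k x\<bar> / (\<bar>k x\<bar> + \<bar>g x\<bar>))"
  have ch: "continuous_map X euclideanreal h"
    unfolding h_def using pos
    by (intro continuous_intros k g) (auto dest: pos simp del: abs_ge_zero)
  have rng: "h x \<in> {0..1}" if "x \<in> topspace X" for x
    using pos[OF that] by (auto simp: h_def divide_simps)
  show ?thesis
  proof (intro exI conjI ballI)
    show "continuous_map X (top_of_set {0..1::real}) h"
      using ch rng by (auto simp: continuous_map_in_subtopology)
    show "h x = 0" if "x \<in> Z" for x using that k by (auto simp: h_def)
    show "h x = 1 \<longleftrightarrow> x \<notin> U" if "x \<in> topspace X" for x
      using pos[OF that] that g by (auto simp: h_def divide_simps)
  qed
qed

section \<open>Combinatorics of gamma covers\<close>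

lemma gamma_from_index:
  assumes J: "infinite J"
    and sub: "\<And>j. j \<in> J \<Longrightarrow> s j \<subseteq> topspace X \<and> s j \<noteq> topspace X"
    and bad: "\<And>x. x \<in> topspace X \<Longrightarrow> finite {j\<in>J. x \<notin> s j}"
  shows "gamma_cover X (s ` J)"
  unfolding gamma_cover_def is_cover_def
proof (intro conjI ballI)
  show "\<Union> (s ` J) = topspace X"
  proof
    show "\<Union> (s ` J) \<subseteq> topspace X" using sub by auto
    show "topspace X \<subseteq> \<Union> (s ` J)"
    proof
      fix x assume x: "x \<in> topspace X"
      have "infinite (J - {j\<in>J. x \<notin> s j})" using J bad[OF x] by auto
      then obtain j where "j \<in> J - {j\<in>J. x \<notin> s j}" by (meson finite.emptyI rev_finite_subset subsetI)
      then show "x \<in> \<Union> (s ` J)" by auto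
    qed
  qed
  show "topspace X \<notin> s ` J" using sub by auto
  show "infinite (s ` J)"
  proof
    assume fin: "finite (s ` J)"
    have "J = (\<Union>W\<in>s ` J. {j\<in>J. s j = W})" by auto
    then obtain W where W: "W \<in> s ` J" "infinite {j\<in>J. s j = W}"
      using J fin by (metis (no_types, lifting) finite_UN)
    then obtain j0 where j0: "j0 \<in> J" "W = s j0" by auto
    then obtain x where x: "x \<in> topspace X" "x \<notin> W" using sub[OF j0(1)] by auto
    have "{j\<in>J. s j = W} \<subseteq> {j\<in>J. x \<notin> s j}" using x by auto
    then show False using bad[OF x(1)] W(2) finite_subset by blast
  qed
  fix x assume x: "x \<in> topspace X"
  have "{U \<in> s ` J. x \<notin> U} = s ` {j\<in>J. x \<notin> s j}" by auto
  then show "finite {U \<in> s ` J. x \<notin> U}" using bad[OF x] by simp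
qed

lemma gamma_cover_infinite: "gamma_cover X U \<Longrightarrow> infinite U"
  unfolding gamma_cover_def by auto

lemma gamma_cover_sub: "gamma_cover X U \<Longrightarrow> W \<in> U \<Longrightarrow> W \<subseteq> topspace X \<and> W \<noteq> topspace X"
  unfolding gamma_cover_def is_cover_def by auto

lemma dedup:
  fixes B :: "nat \<Rightarrow> 'a set set"
  assumes fin: "\<And>n. finite (B n)" and g: "gamma_cover X (\<Union>n. B n)"
  shows "\<exists>B'. (\<forall>n. B' n \<subseteq> B n) \<and> infinite (SIGMA n:UNIV. B' n) \<and>
     (\<forall>x\<in>topspace X. finite {p \<in> (SIGMA n:UNIV. B' n). x \<notin> snd p})"
proof -
  define B' where "B' n = {W \<in> B n. \<forall>k<n. W \<notin> B k}" for n
  have inj: "inj_on snd (SIGMA n:UNIV. B' n)"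
  proof (rule inj_onI)
    fix p q assume p: "p \<in> (SIGMA n:UNIV. B' n)" and q: "q \<in> (SIGMA n:UNIV. B' n)" and e: "snd p = snd q"
    obtain n W where pn: "p = (n, W)" "W \<in> B' n" using p by auto
    obtain n' W' where qn: "q = (n', W')" "W' \<in> B' n'" using q by auto
    have "W = W'" using e pn qn by simp
    then have "n = n'" using pn qn unfolding B'_def by (metis (no_types, lifting) mem_Collect_eq nat_neq_iff)
    then show "p = q" using pn qn \<open>W = W'\<close> by simp
  qed
  have img: "snd ` (SIGMA n:UNIV. B' n) = (\<Union>n. B n)"
  proof
    show "snd ` (SIGMA n:UNIV. B' n) \<subseteq> (\<Union>n. B n)" unfolding B'_def by auto
    show "(\<Union>n. B n) \<subseteq> snd ` (SIGMA n:UNIV. B' n)"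
    proof
      fix W assume "W \<in> (\<Union>n. B n)"
      then have ex: "\<exists>n. W \<in> B n" by auto
      define n where "n = (LEAST n. W \<in> B n)"
      have "W \<in> B n" unfolding n_def using ex by (rule LeastI_ex)
      moreover have "\<forall>k<n. W \<notin> B k" unfolding n_def using not_less_Least by blast
      ultimately have "(n, W) \<in> (SIGMA n:UNIV. B' n)" unfolding B'_def by auto
      then show "W \<in> snd ` (SIGMA n:UNIV. B' n)" by force
    qed
  qed
  show ?thesis
  proof (intro exI conjI allI ballI)
    show "B' n \<subseteq> B n" for n unfolding B'_def by auto
    show "infinite (SIGMA n:UNIV. B' n)"
      using img gamma_cover_infinite[OF g] by (metis finite_imageI)
    fix x assume x: "x \<in> topspace X"
    have fx: "finite {W \<in> (\<Union>n. B n). x \<notin> W}" using g x unfolding gamma_cover_def by auto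
    have "snd ` {p \<in> (SIGMA n:UNIV. B' n). x \<notin> snd p} \<subseteq> {W \<in> (\<Union>n. B n). x \<notin> W}"
      using img by auto
    then have "finite (snd ` {p \<in> (SIGMA n:UNIV. B' n). x \<notin> snd p})" using fx finite_subset by blast
    then show "finite {p \<in> (SIGMA n:UNIV. B' n). x \<notin> snd p}"
      using inj by (metis (no_types, lifting) finite_imageD inj_on_subset mem_Collect_eq subsetI)
  qed
qed

definition seqF :: "'a topology \<Rightarrow> (nat \<Rightarrow> 'a set) \<Rightarrow> (nat \<Rightarrow> 'a set) \<Rightarrow> bool" where
  "seqF X u z \<longleftrightarrow> (\<forall>m. cozero_set X (u m) \<and> zero_set X (z m) \<and> z m \<subseteq> u m \<and> u m \<noteq> topspace X)
     \<and> (\<forall>x\<in>topspace X. finite {m. x \<notin> z m})"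

definition seqF' :: "'a topology \<Rightarrow> (nat \<Rightarrow> 'a set) \<Rightarrow> (nat \<Rightarrow> 'a set) \<Rightarrow> bool" where
  "seqF' X u z \<longleftrightarrow> (\<forall>m. cozero_set X (u m) \<and> zero_set X (z m) \<and> z m \<subseteq> u m)
     \<and> (\<forall>x\<in>topspace X. finite {m. x \<notin> z m})"

lemma GammaF_seq:
  assumes "A \<in> Gamma_F X"
  shows "\<exists>u z. (\<forall>m. u m \<in> A) \<and> seqF X u z"
proof -
  from assms obtain F where gA: "gamma_cover X A" and co: "\<forall>U\<in>A. cozero_set X U"
    and F: "\<forall>U\<in>A. zero_set X (F U) \<and> F U \<subseteq> U" and gF: "gamma_cover X (F ` A)"
    unfolding Gamma_F_def by auto
  obtain Z :: "nat \<Rightarrow> _" where Z: "inj Z" "range Z \<subseteq> F ` A"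
    using infinite_countable_subset gamma_cover_infinite[OF gF] by metis
  have ex: "\<exists>U\<in>A. F U = Z m" for m
  proof -
    have "Z m \<in> F ` A" using Z(2) by auto
    then show ?thesis by (metis imageE)
  qed
  define u where "u m = (SOME U. U \<in> A \<and> F U = Z m)" for m
  have u: "u m \<in> A \<and> F (u m) = Z m" for m
    unfolding u_def using ex[of m] by (metis (mono_tags, lifting) someI_ex)
  show ?thesis
  proof (intro exI conjI allI)
    show "u m \<in> A" for m using u by blast
    show "seqF X u Z"
      unfolding seqF_def
    proof (intro conjI allI ballI)
      fix m
      show "cozero_set X (u m)" using co u by blast
      show "zero_set X (Z m)" using F u by metis
      show "Z m \<subseteq> u m" using F u by metis
      show "u m \<noteq> topspace X" using gamma_cover_sub[OF gA] u by blast
    next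
      fix x assume x: "x \<in> topspace X"
      have "finite {V \<in> F ` A. x \<notin> V}" using gF x unfolding gamma_cover_def by auto
      moreover have "Z ` {m. x \<notin> Z m} \<subseteq> {V \<in> F ` A. x \<notin> V}" using Z(2) by auto
      ultimately have "finite (Z ` {m. x \<notin> Z m})" using finite_subset by blast
      then show "finite {m. x \<notin> Z m}" using Z(1) finite_imageD inj_on_subset by blast
    qed
  qed
qed

lemma seqF_gamma: "seqF X u z \<Longrightarrow> gamma_cover X (range u)"
  unfolding seqF_def
  by (rule gamma_from_index) (auto dest: cozero_subset intro: rev_finite_subset)

lemma seqF_range:
  assumes s: "seqF X u z"
  shows "range u \<in> Gamma_F X"
proof -
  have g: "gamma_cover X (range u)" using seqF_gamma[OF s] .
  define c where "c U = (SOME m. u m = U)" for U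
  have c: "u (c U) = U" if "U \<in> range u" for U
    unfolding c_def using that by (metis (mono_tags, lifting) imageE someI_ex)
  define F where "F U = z (c U)" for U
  have "gamma_cover X (F ` range u)"
  proof (rule gamma_from_index)
    show "infinite (range u)" using gamma_cover_infinite[OF g] .
    fix U assume "U \<in> range u"
    then obtain m where m: "U = u m" by auto
    then have "F U \<subseteq> U" "U \<subseteq> topspace X" "U \<noteq> topspace X"
      using s c[OF \<open>U \<in> range u\<close>] cozero_subset[of X "u m"] unfolding seqF_def F_def by metis+
    then show "F U \<subseteq> topspace X \<and> F U \<noteq> topspace X" by auto
  next
    fix x assume x: "x \<in> topspace X"
    have "{U \<in> range u. x \<notin> F U} \<subseteq> u ` {m. x \<notin> z m}"
    proof
      fix U assume "U \<in> {U \<in> range u. x \<notin> F U}"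
      then have "U = u (c U)" "x \<notin> z (c U)" using c unfolding F_def by auto
      then show "U \<in> u ` {m. x \<notin> z m}" by blast
    qed
    moreover have "finite {m. x \<notin> z m}" using s x unfolding seqF_def by auto
    ultimately show "finite {U \<in> range u. x \<notin> F U}" using finite_subset by blast
  qed
  moreover have "\<forall>U\<in>range u. zero_set X (F U) \<and> F U \<subseteq> U"
    using s c unfolding seqF_def F_def by auto
  moreover have "\<forall>U\<in>range u. cozero_set X U" using s unfolding seqF_def by auto
  ultimately show ?thesis unfolding Gamma_F_def using g by blast
qed

section \<open>Sequence forms of the selection principles\<close>

definition P2seq :: "'a topology \<Rightarrow> bool" where
  "P2seq X \<longleftrightarrow> (\<forall>(u::nat \<Rightarrow> nat \<Rightarrow> 'a set) z. (\<forall>n. seqF X (u n) (z n)) \<longrightarrow>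
     (\<exists>M::nat \<Rightarrow> nat set. (\<forall>n. finite (M n)) \<and> infinite (SIGMA n:UNIV. M n) \<and>
       (\<forall>x\<in>topspace X. finite {p \<in> (SIGMA n:UNIV. M n). x \<notin> u (fst p) (snd p)})))"

definition P2seq' :: "'a topology \<Rightarrow> bool" where
  "P2seq' X \<longleftrightarrow> (\<forall>(u::nat \<Rightarrow> nat \<Rightarrow> 'a set) z. (\<forall>n. seqF' X (u n) (z n)) \<longrightarrow>
     (\<exists>M::nat \<Rightarrow> nat set. (\<forall>n. finite (M n)) \<and> infinite (SIGMA n:UNIV. M n) \<and>
       (\<forall>x\<in>topspace X. finite {p \<in> (SIGMA n:UNIV. M n). x \<notin> u (fst p) (snd p)})))"

definition P4seq :: "'a topology \<Rightarrow> bool" where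
  "P4seq X \<longleftrightarrow> (\<forall>(u::nat \<Rightarrow> nat \<Rightarrow> 'a set) z. (\<forall>n. seqF X (u n) (z n)) \<longrightarrow>
     (\<exists>m. \<forall>x\<in>topspace X. finite {n. x \<notin> u n (m n)}))"

lemma P2_P2seq:
  assumes P2: "Sfin (Gamma_F X) (Gamma_open X)"
  shows "P2seq X"
  unfolding P2seq_def
proof (intro allI impI)
  fix u z :: "nat \<Rightarrow> nat \<Rightarrow> 'a set"
  assume s: "\<forall>n. seqF X (u n) (z n)"
  have rng: "\<forall>n. range (u n) \<in> Gamma_F X" using s seqF_range by blast
  obtain B where B: "\<forall>n. finite (B n) \<and> B n \<subseteq> range (u n)" and BG: "(\<Union>n. B n) \<in> Gamma_open X"
    using P2 rng unfolding Sfin_def by (elim allE[of _ "\<lambda>n. range (u n)"]) auto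
  have "gamma_cover X (\<Union>n. B n)" using BG unfolding Gamma_open_def by auto
  then obtain B' where B'1: "\<forall>n. B' n \<subseteq> B n" and B'2: "infinite (SIGMA n:UNIV. B' n)"
    and B'3: "\<forall>x\<in>topspace X. finite {p \<in> (SIGMA n:UNIV. B' n). x \<notin> snd p}"
    using dedup[of B X] B by blast
  define c where "c n W = (SOME m. u n m = W)" for n W
  have c: "u n (c n W) = W" if "W \<in> B' n" for n W
  proof -
    have "W \<in> range (u n)" using that B B'1 by blast
    then show ?thesis unfolding c_def by (metis (mono_tags, lifting) imageE someI_ex)
  qed
  define M where "M n = c n ` B' n" for n
  define \<Phi> where "\<Phi> p = (fst p, c (fst p) (snd p))" for p :: "nat \<times> 'a set"
  have SM: "(SIGMA n:UNIV. M n) = \<Phi> ` (SIGMA n:UNIV. B' n)"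
  proof
    show "(SIGMA n:UNIV. M n) \<subseteq> \<Phi> ` (SIGMA n:UNIV. B' n)"
    proof
      fix p assume "p \<in> (SIGMA n:UNIV. M n)"
      then obtain n W where "p = (n, c n W)" "W \<in> B' n" unfolding M_def by auto
      then show "p \<in> \<Phi> ` (SIGMA n:UNIV. B' n)" unfolding \<Phi>_def
        by (intro image_eqI[of _ _ "(n, W)"]) auto
    qed
    show "\<Phi> ` (SIGMA n:UNIV. B' n) \<subseteq> (SIGMA n:UNIV. M n)"
      unfolding M_def \<Phi>_def by auto
  qed
  have inj: "inj_on \<Phi> (SIGMA n:UNIV. B' n)"
  proof (rule inj_onI)
    fix p q assume p: "p \<in> (SIGMA n:UNIV. B' n)" and q: "q \<in> (SIGMA n:UNIV. B' n)" and e: "\<Phi> p = \<Phi> q"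
    then have "fst p = fst q" unfolding \<Phi>_def by simp
    moreover have "snd p = snd q"
    proof -
      have "c (fst p) (snd p) = c (fst q) (snd q)" using arg_cong[OF e, of snd] unfolding \<Phi>_def by (simp only: snd_conv)
      moreover have "snd p \<in> B' (fst p)" "snd q \<in> B' (fst q)" using p q by auto
      ultimately show ?thesis using c \<open>fst p = fst q\<close> by metis
    qed
    ultimately show "p = q" by (simp add: prod_eq_iff)
  qed
  show "\<exists>M. (\<forall>n. finite (M n)) \<and> infinite (SIGMA n:UNIV. M n) \<and>
       (\<forall>x\<in>topspace X. finite {p \<in> (SIGMA n:UNIV. M n). x \<notin> u (fst p) (snd p)})"
  proof (intro exI conjI allI ballI)
    show "finite (M n)" for n unfolding M_def using B B'1 by (meson finite_imageI finite_subset)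
    show "infinite (SIGMA n:UNIV. M n)" unfolding SM using B'2 inj finite_imageD by blast
    fix x assume x: "x \<in> topspace X"
    have "{p \<in> (SIGMA n:UNIV. M n). x \<notin> u (fst p) (snd p)} \<subseteq> \<Phi> ` {p \<in> (SIGMA n:UNIV. B' n). x \<notin> snd p}"
    proof
      fix p assume "p \<in> {p \<in> (SIGMA n:UNIV. M n). x \<notin> u (fst p) (snd p)}"
      then obtain q where q: "q \<in> (SIGMA n:UNIV. B' n)" "p = \<Phi> q" "x \<notin> u (fst p) (snd p)"
        unfolding SM by auto
      then have "x \<notin> snd q" using c[of "snd q" "fst q"] unfolding \<Phi>_def by (auto)
      then show "p \<in> \<Phi> ` {p \<in> (SIGMA n:UNIV. B' n). x \<notin> snd p}" using q by blast
    qed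
    then show "finite {p \<in> (SIGMA n:UNIV. M n). x \<notin> u (fst p) (snd p)}"
      using B'3 x finite_subset by blast
  qed
qed

lemma P2seq_P2seq':
  assumes P: "P2seq X"
  shows "P2seq' X"
  unfolding P2seq'_def
proof (intro allI impI)
  fix u z :: "nat \<Rightarrow> nat \<Rightarrow> 'a set"
  assume s: "\<forall>n. seqF' X (u n) (z n)"
  define S where "S n = {m. u n m \<noteq> topspace X}" for n
  define T where "T = {n. infinite (S n)}"
  define m0 where "m0 n = (SOME m. u n m = topspace X)" for n
  have m0: "u n (m0 n) = topspace X" if "n \<notin> T" for n
  proof -
    have "finite (S n)" using that unfolding T_def by auto
    then have "\<exists>m. m \<notin> S n" using infinite_UNIV_nat by (metis UNIV_I finite_subset subsetI)
    then have "\<exists>m. u n m = topspace X" unfolding S_def by auto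
    then show ?thesis unfolding m0_def by (rule someI_ex)
  qed
  have "\<forall>n\<in>T. \<exists>e::nat \<Rightarrow> nat. inj e \<and> range e \<subseteq> S n"
  proof
    fix n assume "n \<in> T"
    then have "infinite (S n)" unfolding T_def by simp
    then show "\<exists>e::nat \<Rightarrow> nat. inj e \<and> range e \<subseteq> S n" by (rule infinite_countable_subset)
  qed
  then have ex_e: "\<exists>f::nat \<Rightarrow> nat. inj f \<and> range f \<subseteq> S n" if "n \<in> T" for n
    using that by blast
  define e where "e n = (SOME f::nat \<Rightarrow> nat. inj f \<and> range f \<subseteq> S n)" for n
  have e: "inj (e n) \<and> range (e n) \<subseteq> S n" if "n \<in> T" for n
    unfolding e_def using ex_e[OF that] by (rule someI_ex)
  have sT: "seqF X (\<lambda>k. u n (e n k)) (\<lambda>k. z n (e n k))" if "n \<in> T" for n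
    unfolding seqF_def
  proof (intro conjI allI ballI)
    fix k
    have sn: "seqF' X (u n) (z n)" using s by blast
    show "cozero_set X (u n (e n k))" "zero_set X (z n (e n k))" "z n (e n k) \<subseteq> u n (e n k)"
      using sn by (simp_all add: seqF'_def)
    have "e n k \<in> S n" using e[OF that] by blast
    then show "u n (e n k) \<noteq> topspace X" unfolding S_def by simp
  next
    fix x assume x: "x \<in> topspace X"
    have sn: "seqF' X (u n) (z n)" using s by blast
    have "finite {m. x \<notin> z n m}" using sn x by (simp add: seqF'_def)
    moreover have "e n ` {k. x \<notin> z n (e n k)} \<subseteq> {m. x \<notin> z n m}" by auto
    ultimately have "finite (e n ` {k. x \<notin> z n (e n k)})" using finite_subset by blast
    moreover have "inj_on (e n) {k. x \<notin> z n (e n k)}"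
      using e[OF that] by (meson inj_on_subset subset_UNIV)
    ultimately show "finite {k. x \<notin> z n (e n k)}"
      using finite_imageD by blast
  qed
  show "\<exists>M::nat \<Rightarrow> nat set. (\<forall>n. finite (M n)) \<and> infinite (SIGMA n:UNIV. M n) \<and>
       (\<forall>x\<in>topspace X. finite {p \<in> (SIGMA n:UNIV. M n). x \<notin> u (fst p) (snd p)})"
  proof (cases "finite T")
    case True
    define M where "M n = (if n \<in> T then {} else {m0 n})" for n
    show ?thesis
    proof (intro exI conjI allI ballI)
      show "finite (M n)" for n unfolding M_def by auto
      have "(\<lambda>n. (n, m0 n)) ` (- T) \<subseteq> (SIGMA n:UNIV. M n)" unfolding M_def by auto
      moreover have "infinite ((\<lambda>n. (n, m0 n)) ` (- T))"
      proof
        assume "finite ((\<lambda>n. (n, m0 n)) ` (- T))"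
        moreover have "inj_on (\<lambda>n. (n, m0 n)) (- T)" by (auto simp: inj_on_def)
        ultimately have "finite (- T)" using finite_imageD by blast
        then have "finite (T \<union> - T)" using True by blast
        then show False using infinite_UNIV_nat by simp
      qed
      ultimately show "infinite (SIGMA n:UNIV. M n)" using finite_subset by blast
      fix x assume x: "x \<in> topspace X"
      have E: "{p \<in> (SIGMA n:UNIV. M n). x \<notin> u (fst p) (snd p)} = {}"
        using m0 x unfolding M_def by auto
      show "finite {p \<in> (SIGMA n:UNIV. M n). x \<notin> u (fst p) (snd p)}" using E by (metis finite.emptyI)
    qed
  next
    case False
    obtain t :: "nat \<Rightarrow> nat" where t: "inj t" "range t \<subseteq> T"
      using infinite_countable_subset[OF False] by blast
    define u' where "u' k j = u (t k) (e (t k) j)" for k j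
    define z' where "z' k j = z (t k) (e (t k) j)" for k j
    have useq: "\<forall>k. seqF X (u' k) (z' k)"
    proof
      fix k
      have "t k \<in> T" using t(2) by blast
      from sT[OF this] show "seqF X (u' k) (z' k)" unfolding u'_def z'_def by simp
    qed
    have PP: "\<exists>M::nat \<Rightarrow> nat set. (\<forall>n. finite (M n)) \<and> infinite (SIGMA n:UNIV. M n) \<and>
       (\<forall>x\<in>topspace X. finite {p \<in> (SIGMA n:UNIV. M n). x \<notin> uu (fst p) (snd p)})"
      if "\<forall>n. seqF X (uu n) (zz n)" for uu zz :: "nat \<Rightarrow> nat \<Rightarrow> 'a set"
      using P that unfolding P2seq_def by blast
    obtain M' :: "nat \<Rightarrow> nat set" where M'1: "\<forall>k. finite (M' k)" and M'2: "infinite (SIGMA k:UNIV. M' k)"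
      and M'3: "\<forall>x\<in>topspace X. finite {p \<in> (SIGMA k:UNIV. M' k). x \<notin> u' (fst p) (snd p)}"
      using PP[OF useq] by blast
    define M where "M n = (if n \<in> range t then e n ` M' (inv t n) else if n \<in> T then {} else {m0 n})" for n
    define \<Psi> where "\<Psi> p = (t (fst p), e (t (fst p)) (snd p))" for p :: "nat \<times> nat"
    have injP: "inj \<Psi>"
    proof (rule injI)
      fix p q assume eq: "\<Psi> p = \<Psi> q"
      then have "t (fst p) = t (fst q)" unfolding \<Psi>_def by simp
      then have 1: "fst p = fst q" using t(1) by (simp add: inj_eq)
      have "e (t (fst p)) (snd p) = e (t (fst p)) (snd q)"
        using arg_cong[OF eq, of snd] 1 unfolding \<Psi>_def by simp
      moreover have "t (fst p) \<in> T" using t(2) by blast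
      then have "inj (e (t (fst p)))" using e by blast
      ultimately have "snd p = snd q" by (simp add: inj_eq)
      then show "p = q" using 1 by (simp add: prod_eq_iff)
    qed
    have sub: "\<Psi> ` (SIGMA k:UNIV. M' k) \<subseteq> (SIGMA n:UNIV. M n)"
    proof
      fix p assume "p \<in> \<Psi> ` (SIGMA k:UNIV. M' k)"
      then obtain k j where kj: "p = (t k, e (t k) j)" "j \<in> M' k" unfolding \<Psi>_def by auto
      have "inv t (t k) = k" using t(1) by simp
      then show "p \<in> (SIGMA n:UNIV. M n)" using kj unfolding M_def by auto
    qed
    show ?thesis
    proof (intro exI conjI allI ballI)
      show "finite (M n)" for n unfolding M_def using M'1 by auto
      have "infinite (\<Psi> ` (SIGMA k:UNIV. M' k))"
        using M'2 injP finite_imageD inj_on_subset by (metis subset_UNIV)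
      then show "infinite (SIGMA n:UNIV. M n)" using sub finite_subset by blast
      fix x assume x: "x \<in> topspace X"
      have "{p \<in> (SIGMA n:UNIV. M n). x \<notin> u (fst p) (snd p)} \<subseteq>
            \<Psi> ` {p \<in> (SIGMA k:UNIV. M' k). x \<notin> u' (fst p) (snd p)}"
      proof
        fix p assume p: "p \<in> {p \<in> (SIGMA n:UNIV. M n). x \<notin> u (fst p) (snd p)}"
        obtain n m where nm: "p = (n, m)" by fastforce
        have mM: "m \<in> M n" and xu: "x \<notin> u n m" using p nm by auto
        show "p \<in> \<Psi> ` {p \<in> (SIGMA k:UNIV. M' k). x \<notin> u' (fst p) (snd p)}"
        proof (cases "n \<in> range t")
          case True
          then obtain k where k: "n = t k" by auto
          have "inv t n = k" using t(1) k by simp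
          then obtain j where j: "j \<in> M' k" "m = e n j" using mM True unfolding M_def by auto
          have "x \<notin> u' k j" using xu j k unfolding u'_def by simp
          moreover have "p = \<Psi> (k, j)" using nm j k unfolding \<Psi>_def by simp
          ultimately show ?thesis using j by force
        next
          case False
          then have "n \<notin> T \<and> m = m0 n" using mM unfolding M_def by (auto split: if_splits)
          then show ?thesis using m0 xu x by auto
        qed
      qed
      moreover have "finite (\<Psi> ` {p \<in> (SIGMA k:UNIV. M' k). x \<notin> u' (fst p) (snd p)})"
        using M'3 x by (intro finite_imageI) blast
      ultimately show "finite {p \<in> (SIGMA n:UNIV. M n). x \<notin> u (fst p) (snd p)}"
        using finite_subset by blast
    qed
  qed
qed

lemma P2seq_P4seq:
  assumes P: "P2seq X"
  shows "P4seq X"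
  unfolding P4seq_def
proof (intro allI impI)
  fix u z :: "nat \<Rightarrow> nat \<Rightarrow> 'a set"
  assume s: "\<forall>n. seqF X (u n) (z n)"
  define W where "W n m = (\<Inter>i\<in>{..n}. u i m)" for n m
  define Z where "Z n m = (\<Inter>i\<in>{..n}. z i m)" for n m
  have sW: "seqF X (W n) (Z n)" for n
    unfolding seqF_def
  proof (intro conjI allI ballI)
    fix m
    have si: "seqF X (u i) (z i)" for i using s by blast
    have "cozero_set X (\<Inter>i\<in>{..n}. u i m)"
      by (rule cozero_INT) (use si in \<open>simp add: seqF_def\<close>)
    then show "cozero_set X (W n m)" unfolding W_def .
    have "zero_set X (\<Inter>i\<in>{..n}. z i m)"
      by (rule zero_INT) (use si in \<open>simp add: seqF_def\<close>)
    then show "zero_set X (Z n m)" unfolding Z_def .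
    have "z i m \<subseteq> u i m" for i using si[of i] by (simp add: seqF_def)
    then show "Z n m \<subseteq> W n m" unfolding Z_def W_def by blast
    have "W n m \<subseteq> u n m" unfolding W_def by auto
    moreover have "u n m \<subseteq> topspace X" "u n m \<noteq> topspace X"
      using si[of n] by (auto simp: seqF_def dest: cozero_subset)
    ultimately show "W n m \<noteq> topspace X" by blast
  next
    fix x assume x: "x \<in> topspace X"
    have "finite {m. x \<notin> z i m}" for i using s x by (simp add: seqF_def)
    then have "finite (\<Union>i\<in>{..n}. {m. x \<notin> z i m})" by simp
    moreover have "{m. x \<notin> Z n m} \<subseteq> (\<Union>i\<in>{..n}. {m. x \<notin> z i m})" unfolding Z_def by blast
    ultimately show "finite {m. x \<notin> Z n m}" using finite_subset by blast
  qed
  have PP: "\<exists>M::nat \<Rightarrow> nat set. (\<forall>n. finite (M n)) \<and> infinite (SIGMA n:UNIV. M n) \<and>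
       (\<forall>x\<in>topspace X. finite {p \<in> (SIGMA n:UNIV. M n). x \<notin> uu (fst p) (snd p)})"
    if "\<forall>n. seqF X (uu n) (zz n)" for uu zz :: "nat \<Rightarrow> nat \<Rightarrow> 'a set"
    using P that unfolding P2seq_def by blast
  have "\<forall>n. seqF X (W n) (Z n)" using sW by blast
  from PP[OF this] obtain M :: "nat \<Rightarrow> nat set" where M1: "\<forall>n. finite (M n)"
    and M2: "infinite (SIGMA n:UNIV. M n)"
    and M3: "\<forall>x\<in>topspace X. finite {p \<in> (SIGMA n:UNIV. M n). x \<notin> W (fst p) (snd p)}"
    by blast
  define S where "S = {n. M n \<noteq> {}}"
  have "infinite S"
  proof
    assume "finite S"
    then have "finite (SIGMA n:S. M n)" using M1 by blast
    moreover have "(SIGMA n:UNIV. M n) \<subseteq> (SIGMA n:S. M n)" unfolding S_def by auto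
    ultimately show False using M2 finite_subset by blast
  qed
  then have exS: "\<exists>n. i \<le> n \<and> M n \<noteq> {}" for i
    unfolding S_def using infinite_nat_iff_unbounded_le by auto
  define N where "N i = (LEAST n. i \<le> n \<and> M n \<noteq> {})" for i
  have N: "i \<le> N i \<and> M (N i) \<noteq> {}" for i
    unfolding N_def using exS[of i] by (rule LeastI_ex)
  define mm where "mm i = (SOME k. k \<in> M (N i))" for i
  have mm: "mm i \<in> M (N i)" for i
    unfolding mm_def using N[of i] by (simp add: some_in_eq)
  show "\<exists>m. \<forall>x\<in>topspace X. finite {n. x \<notin> u n (m n)}"
  proof (intro exI ballI)
    fix x assume x: "x \<in> topspace X"
    define Bad where "Bad = {p \<in> (SIGMA n:UNIV. M n). x \<notin> W (fst p) (snd p)}"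
    have fB: "finite Bad" using M3 x unfolding Bad_def by blast
    have "{i. x \<notin> u i (mm i)} \<subseteq> {..Max (fst ` Bad)}"
    proof
      fix i assume i: "i \<in> {i. x \<notin> u i (mm i)}"
      have "W (N i) (mm i) \<subseteq> u i (mm i)" unfolding W_def using N[of i] by auto
      then have "(N i, mm i) \<in> Bad" using i mm[of i] unfolding Bad_def by auto
      then have "N i \<le> Max (fst ` Bad)" using fB by (metis Max_ge finite_imageI fst_conv image_eqI)
      then show "i \<in> {..Max (fst ` Bad)}" using N[of i] by auto
    qed
    then show "finite {i. x \<notin> u i (mm i)}" using finite_subset by blast
  qed
qed

lemma P4seq_S1:
  assumes P: "P4seq X"
  shows "S1 (Gamma_F X) (Gamma_open X)"
  unfolding S1_def
proof (intro allI impI)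
  fix A :: "nat \<Rightarrow> 'a set set"
  assume A: "\<forall>n. A n \<in> Gamma_F X"
  have ex: "\<exists>uz. (\<forall>m. fst uz m \<in> A n) \<and> seqF X (fst uz) (snd uz)" for n
  proof -
    have "A n \<in> Gamma_F X" using A by blast
    then obtain u z where "(\<forall>m. u m \<in> A n) \<and> seqF X u z" using GammaF_seq[of "A n" X] by blast
    then show ?thesis by (intro exI[of _ "(u, z)"]) simp
  qed
  define uz where "uz n = (SOME uz. (\<forall>m. fst uz m \<in> A n) \<and> seqF X (fst uz) (snd uz))" for n
  have uz: "(\<forall>m. fst (uz n) m \<in> A n) \<and> seqF X (fst (uz n)) (snd (uz n))" for n
    unfolding uz_def using ex[of n] by (rule someI_ex)
  define u where "u n = fst (uz n)" for n
  define z where "z n = snd (uz n)" for n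
  have s: "\<forall>n. seqF X (u n) (z n)" using uz unfolding u_def z_def by blast
  have PP: "\<exists>m. \<forall>x\<in>topspace X. finite {n. x \<notin> uu n (m n)}"
    if "\<forall>n. seqF X (uu n) (zz n)" for uu zz :: "nat \<Rightarrow> nat \<Rightarrow> 'a set"
    using P that unfolding P4seq_def by blast
  from PP[OF s] obtain m where m: "\<forall>x\<in>topspace X. finite {n. x \<notin> u n (m n)}" by blast
  define b where "b n = u n (m n)" for n
  have "gamma_cover X (b ` UNIV)"
  proof (rule gamma_from_index)
    show "infinite (UNIV :: nat set)" by simp
    fix n
    have "seqF X (u n) (z n)" using s by blast
    then show "b n \<subseteq> topspace X \<and> b n \<noteq> topspace X"
      unfolding b_def seqF_def by (auto dest: cozero_subset)
  next
    fix x assume "x \<in> topspace X"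
    then show "finite {n \<in> UNIV. x \<notin> b n}" using m unfolding b_def by simp
  qed
  moreover have "\<forall>U\<in>range b. openin X U"
    using s unfolding b_def seqF_def by (auto intro: cozero_open)
  ultimately have "range b \<in> Gamma_open X" unfolding Gamma_open_def by simp
  moreover have "\<forall>n. b n \<in> A n" using uz unfolding b_def u_def by blast
  ultimately show "\<exists>b. (\<forall>n. b n \<in> A n) \<and> range b \<in> Gamma_open X" by blast
qed

lemma S1_Sfin:
  assumes "S1 \<A> \<B>"
  shows "Sfin \<A> \<B>"
  unfolding Sfin_def
proof (intro allI impI)
  fix A :: "nat \<Rightarrow> _" assume A: "\<forall>n. A n \<in> \<A>"
  from assms have "(\<forall>n. A n \<in> \<A>) \<longrightarrow> (\<exists>b. (\<forall>n. b n \<in> A n) \<and> range b \<in> \<B>)"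
    unfolding S1_def by (rule spec)
  then obtain b where b: "\<forall>n. b n \<in> A n" "range b \<in> \<B>"
    using A by blast
  have "(\<Union>n. {b n}) = range b" by auto
  then show "\<exists>B. (\<forall>n. finite (B n) \<and> B n \<subseteq> A n) \<and> (\<Union>n. B n) \<in> \<B>"
    using b by (intro exI[of _ "\<lambda>n. {b n}"]) auto
qed

lemma GammaF_seqs:
  assumes A: "\<forall>n. A n \<in> Gamma_F X"
  shows "\<exists>u z. \<forall>n. (\<forall>m. u n m \<in> A n) \<and> seqF X (u n) (z n)"
proof -
  have ex: "\<exists>uz. (\<forall>m. fst uz m \<in> A n) \<and> seqF X (fst uz) (snd uz)" for n
  proof -
    have "A n \<in> Gamma_F X" using A by blast
    then obtain u z where "(\<forall>m. u m \<in> A n) \<and> seqF X u z" using GammaF_seq[of "A n" X] by blast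
    then show ?thesis by (intro exI[of _ "(u, z)"]) simp
  qed
  define uz where "uz n = (SOME uz. (\<forall>m. fst uz m \<in> A n) \<and> seqF X (fst uz) (snd uz))" for n
  have uz: "(\<forall>m. fst (uz n) m \<in> A n) \<and> seqF X (fst (uz n)) (snd (uz n))" for n
    unfolding uz_def using ex[of n] by (rule someI_ex)
  show ?thesis
    by (rule exI[of _ "\<lambda>n. fst (uz n)"], rule exI[of _ "\<lambda>n. snd (uz n)"]) (use uz in blast)
qed

section \<open>The space C_p(X)\<close>

lemma Cp_top: "topspace (Cp X) = {f \<in> topspace X \<rightarrow>\<^sub>E UNIV. continuous_map X euclideanreal f}"
  unfolding Cp_def by (auto simp: topspace_subtopology)

lemma Cp_proj:
  assumes "x \<in> topspace X"
  shows "continuous_map (Cp X) euclideanreal (\<lambda>g. g x)"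
  unfolding Cp_def
  by (rule continuous_map_from_subtopology) (use continuous_map_product_projection[OF assms, of "\<lambda>_. euclideanreal"] in simp)

lemma Gamma_pt_Cp:
  assumes f: "f \<in> topspace (Cp X)"
  shows "A \<in> Gamma_pt (Cp X) f \<longleftrightarrow> A \<subseteq> topspace (Cp X) \<and> infinite A \<and> f \<notin> A \<and>
           (\<forall>x\<in>topspace X. \<forall>e>0. finite {g\<in>A. e \<le> \<bar>g x - f x\<bar>})"
proof
  assume H: "A \<in> Gamma_pt (Cp X) f"
  have conv: "\<And>U. openin (Cp X) U \<and> f \<in> U \<Longrightarrow> finite (A - U)" and Asub: "A \<subseteq> topspace (Cp X)"
    using H unfolding Gamma_pt_def by auto
  have "finite {g\<in>A. e \<le> \<bar>g x - f x\<bar>}" if x: "x \<in> topspace X" and e: "e > 0" for x e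
  proof -
    define U where "U = {g \<in> topspace (Cp X). g x \<in> ball (f x) e}"
    have "openin (Cp X) U" unfolding U_def
      by (rule openin_continuous_map_preimage[OF Cp_proj[OF x]]) simp
    moreover have "f \<in> U" unfolding U_def using f e by simp
    ultimately have "finite (A - U)" using conv by blast
    moreover have "{g\<in>A. e \<le> \<bar>g x - f x\<bar>} \<subseteq> A - U"
      unfolding U_def by (auto simp: dist_real_def)
    ultimately show ?thesis using finite_subset by blast
  qed
  then show "A \<subseteq> topspace (Cp X) \<and> infinite A \<and> f \<notin> A \<and>
           (\<forall>x\<in>topspace X. \<forall>e>0. finite {g\<in>A. e \<le> \<bar>g x - f x\<bar>})"
    using H unfolding Gamma_pt_def by auto
next
  assume H: "A \<subseteq> topspace (Cp X) \<and> infinite A \<and> f \<notin> A \<and>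
           (\<forall>x\<in>topspace X. \<forall>e>0. finite {g\<in>A. e \<le> \<bar>g x - f x\<bar>})"
  have "finite (A - U)" if U: "openin (Cp X) U" "f \<in> U" for U
  proof -
    define C where "C = {f \<in> topspace X \<rightarrow>\<^sub>E UNIV. continuous_map X euclideanreal f}"
    obtain T where T: "openin (product_topology (\<lambda>_. euclideanreal) (topspace X)) T" "U = T \<inter> C"
      using U(1) unfolding Cp_def C_def openin_subtopology by blast
    have "f \<in> T" using T U(2) by blast
    then obtain V where V1: "finite {i \<in> topspace X. V i \<noteq> topspace euclideanreal}"
      and V2: "\<forall>i\<in>topspace X. openin euclideanreal (V i)" and V3: "f \<in> Pi\<^sub>E (topspace X) V"
      and V4: "Pi\<^sub>E (topspace X) V \<subseteq> T"
      using T(1) unfolding openin_product_topology_alt by blast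
    define K where "K = {i \<in> topspace X. V i \<noteq> UNIV}"
    have fK: "finite K" using V1 unfolding K_def by simp
    have exe: "\<exists>e>0. ball (f i) e \<subseteq> V i" if "i \<in> K" for i
    proof -
      have "open (V i)" "f i \<in> V i" using V2 V3 that unfolding K_def by (auto simp: PiE_iff)
      then show ?thesis using open_contains_ball by blast
    qed
    define eps where "eps i = (SOME e. e > 0 \<and> ball (f i) e \<subseteq> V i)" for i
    have eps: "eps i > 0 \<and> ball (f i) (eps i) \<subseteq> V i" if "i \<in> K" for i
      unfolding eps_def using exe[OF that] by (rule someI_ex)
    have "A - U \<subseteq> (\<Union>i\<in>K. {g\<in>A. eps i \<le> \<bar>g i - f i\<bar>})"
    proof
      fix g assume g: "g \<in> A - U"
      then have gC: "g \<in> C" using H Cp_top[of X] unfolding C_def by auto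
      show "g \<in> (\<Union>i\<in>K. {g\<in>A. eps i \<le> \<bar>g i - f i\<bar>})"
      proof (rule ccontr)
        assume "g \<notin> (\<Union>i\<in>K. {g\<in>A. eps i \<le> \<bar>g i - f i\<bar>})"
        then have lt: "\<forall>i\<in>K. \<bar>g i - f i\<bar> < eps i" using g by force
        have "g \<in> Pi\<^sub>E (topspace X) V"
        proof (rule PiE_I)
          fix i assume i: "i \<in> topspace X"
          show "g i \<in> V i"
          proof (cases "i \<in> K")
            case True
            then have "g i \<in> ball (f i) (eps i)" using lt by (auto simp: dist_real_def abs_minus_commute)
            then show ?thesis using eps[OF True] by blast
          next
            case False then show ?thesis using i unfolding K_def by auto
          qed
        next
          fix i assume "i \<notin> topspace X"
          then show "g i = undefined" using gC unfolding C_def by (auto simp: PiE_iff extensional_def)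
        qed
        then have "g \<in> T" using V4 by blast
        then have "g \<in> U" using T(2) gC by blast
        then show False using g by blast
      qed
    qed
    moreover have "finite (\<Union>i\<in>K. {g\<in>A. eps i \<le> \<bar>g i - f i\<bar>})"
      using fK H eps unfolding K_def by auto
    ultimately show ?thesis using finite_subset by blast
  qed
  then show "A \<in> Gamma_pt (Cp X) f" unfolding Gamma_pt_def using H by blast
qed

lemma CpGamma_from_index:
  assumes f: "f \<in> topspace (Cp X)" and I: "infinite I"
    and G: "\<And>i. i \<in> I \<Longrightarrow> G i \<in> topspace (Cp X) \<and> G i \<noteq> f"
    and bad: "\<And>x e. x \<in> topspace X \<Longrightarrow> e > 0 \<Longrightarrow> finite {i\<in>I. e \<le> \<bar>G i x - f x\<bar>}"
  shows "G ` I \<in> Gamma_pt (Cp X) f"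
  unfolding Gamma_pt_Cp[OF f]
proof (intro conjI ballI allI impI)
  show "G ` I \<subseteq> topspace (Cp X)" using G by blast
  show "f \<notin> G ` I" using G by blast
  show "infinite (G ` I)"
  proof
    assume fin: "finite (G ` I)"
    have "I = (\<Union>g\<in>G ` I. {i\<in>I. G i = g})" by auto
    then obtain g where g: "g \<in> G ` I" "infinite {i\<in>I. G i = g}"
      using I fin by (metis (no_types, lifting) finite_UN)
    then obtain i0 where i0: "i0 \<in> I" "g = G i0" by auto
    have gC: "g \<in> topspace (Cp X)" "g \<noteq> f" using G[OF i0(1)] i0 by auto
    have "\<exists>x\<in>topspace X. g x \<noteq> f x"
    proof (rule ccontr)
      assume "\<not> (\<exists>x\<in>topspace X. g x \<noteq> f x)"
      then have "g = f" using gC(1) f unfolding Cp_top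
        by (intro extensionalityI[of _ "topspace X"]) (auto simp: PiE_iff)
      then show False using gC by blast
    qed
    then obtain x where x: "x \<in> topspace X" "g x \<noteq> f x" by blast
    have "{i\<in>I. G i = g} \<subseteq> {i\<in>I. \<bar>g x - f x\<bar> \<le> \<bar>G i x - f x\<bar>}" by auto
    moreover have "finite {i\<in>I. \<bar>g x - f x\<bar> \<le> \<bar>G i x - f x\<bar>}" using bad x by auto
    ultimately show False using g(2) finite_subset by blast
  qed
  fix x e assume x: "x \<in> topspace X" and e: "(e::real) > 0"
  have "{g \<in> G ` I. e \<le> \<bar>g x - f x\<bar>} = G ` {i\<in>I. e \<le> \<bar>G i x - f x\<bar>}" by auto
  then show "finite {g \<in> G ` I. e \<le> \<bar>g x - f x\<bar>}" using bad[OF x e] by simp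
qed

lemma Cp_cont: "g \<in> topspace (Cp X) \<Longrightarrow> continuous_map X euclideanreal g"
  unfolding Cp_top by blast

lemma P2seq'_P1:
  assumes P: "P2seq' X"
  shows "\<forall>f\<in>topspace (Cp X). Sfin (Gamma_pt (Cp X) f) (Gamma_pt (Cp X) f)"
proof (intro ballI)
  fix f assume f: "f \<in> topspace (Cp X)"
  show "Sfin (Gamma_pt (Cp X) f) (Gamma_pt (Cp X) f)"
    unfolding Sfin_def
  proof (intro allI impI)
    fix A :: "nat \<Rightarrow> _" assume A: "\<forall>n. A n \<in> Gamma_pt (Cp X) f"
    have An: "A n \<subseteq> topspace (Cp X) \<and> infinite (A n) \<and> f \<notin> A n \<and>
           (\<forall>x\<in>topspace X. \<forall>e>0. finite {g\<in>A n. e \<le> \<bar>g x - f x\<bar>})" for n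
      using A Gamma_pt_Cp[OF f] by blast
    have exg: "\<exists>g::nat \<Rightarrow> _. inj g \<and> range g \<subseteq> A n" for n
      using An[of n] by (intro infinite_countable_subset) blast
    define g where "g n = (SOME g::nat \<Rightarrow> _. inj g \<and> range g \<subseteq> A n)" for n
    have g: "inj (g n) \<and> range (g n) \<subseteq> A n" for n
      unfolding g_def using exg[of n] by (rule someI_ex)
    have gC: "g n m \<in> topspace (Cp X)" "g n m \<noteq> f" for n m
      using g[of n] An[of n] by auto
    have gbad: "finite {m. e \<le> \<bar>g n m x - f x\<bar>}" if "x \<in> topspace X" "e > 0" for n x e
    proof -
      have "g n ` {m. e \<le> \<bar>g n m x - f x\<bar>} \<subseteq> {h\<in>A n. e \<le> \<bar>h x - f x\<bar>}" using g[of n] by auto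
      moreover have "finite {h\<in>A n. e \<le> \<bar>h x - f x\<bar>}" using An[of n] that by blast
      ultimately have "finite (g n ` {m. e \<le> \<bar>g n m x - f x\<bar>})" using finite_subset by blast
      moreover have "inj_on (g n) {m. e \<le> \<bar>g n m x - f x\<bar>}" using g[of n] by (meson inj_on_subset subset_UNIV)
      ultimately show ?thesis using finite_imageD by blast
    qed
    have cd: "continuous_map X euclideanreal (\<lambda>x. \<bar>g n m x - f x\<bar>)" for n m
      using Cp_cont[OF gC(1)[of n m]] Cp_cont[OF f] by (intro continuous_intros)
    define u where "u n m = {x \<in> topspace X. \<bar>g n m x - f x\<bar> < 1 / (real n + 1)}" for n m
    define z where "z n m = {x \<in> topspace X. \<bar>g n m x - f x\<bar> \<le> 1 / (2 * (real n + 1))}" for n m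
    have s: "\<forall>n. seqF' X (u n) (z n)"
    proof
      fix n
      show "seqF' X (u n) (z n)"
        unfolding seqF'_def
      proof (intro conjI allI ballI)
        fix m
        show "cozero_set X (u n m)" unfolding u_def by (rule cozero_lt[OF cd])
        show "zero_set X (z n m)" unfolding z_def by (rule zero_le[OF cd])
        have "1 / (2 * (real n + 1)) < 1 / (real n + 1)" by (simp add: divide_simps)
        then show "z n m \<subseteq> u n m" unfolding u_def z_def by auto
      next
        fix x assume x: "x \<in> topspace X"
        have "{m. x \<notin> z n m} \<subseteq> {m. 1 / (2 * (real n + 1)) \<le> \<bar>g n m x - f x\<bar>}"
          unfolding z_def using x by auto
        moreover have "finite {m. 1 / (2 * (real n + 1)) \<le> \<bar>g n m x - f x\<bar>}"
          by (rule gbad[OF x]) simp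
        ultimately show "finite {m. x \<notin> z n m}" using finite_subset by blast
      qed
    qed
    have PP: "\<exists>M::nat \<Rightarrow> nat set. (\<forall>n. finite (M n)) \<and> infinite (SIGMA n:UNIV. M n) \<and>
       (\<forall>x\<in>topspace X. finite {p \<in> (SIGMA n:UNIV. M n). x \<notin> uu (fst p) (snd p)})"
      if "\<forall>n. seqF' X (uu n) (zz n)" for uu zz :: "nat \<Rightarrow> nat \<Rightarrow> 'a set"
      using P that unfolding P2seq'_def by blast
    from PP[OF s] obtain M :: "nat \<Rightarrow> nat set" where M1: "\<forall>n. finite (M n)"
      and M2: "infinite (SIGMA n:UNIV. M n)"
      and M3: "\<forall>x\<in>topspace X. finite {p \<in> (SIGMA n:UNIV. M n). x \<notin> u (fst p) (snd p)}"
      by blast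
    define G where "G p = g (fst p) (snd p)" for p
    have UB: "(\<Union>n. g n ` M n) = G ` (SIGMA n:UNIV. M n)"
    proof
      show "(\<Union>n. g n ` M n) \<subseteq> G ` (SIGMA n:UNIV. M n)"
      proof
        fix h assume "h \<in> (\<Union>n. g n ` M n)"
        then obtain n m where "m \<in> M n" "h = g n m" by blast
        then show "h \<in> G ` (SIGMA n:UNIV. M n)" unfolding G_def by (intro image_eqI[of _ _ "(n, m)"]) auto
      qed
      show "G ` (SIGMA n:UNIV. M n) \<subseteq> (\<Union>n. g n ` M n)" unfolding G_def by auto
    qed
    have "G ` (SIGMA n:UNIV. M n) \<in> Gamma_pt (Cp X) f"
    proof (rule CpGamma_from_index[OF f M2])
      fix p show "G p \<in> topspace (Cp X) \<and> G p \<noteq> f" unfolding G_def using gC by blast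
    next
      fix x e assume x: "x \<in> topspace X" and e: "(e::real) > 0"
      obtain N where N: "N > 0" "inverse (real N) < e" using ex_inverse_of_nat_less[OF e] by blast
      have "{p \<in> (SIGMA n:UNIV. M n). e \<le> \<bar>G p x - f x\<bar>} \<subseteq>
             (SIGMA n:{..<N}. M n) \<union> {p \<in> (SIGMA n:UNIV. M n). x \<notin> u (fst p) (snd p)}"
      proof
        fix p assume p: "p \<in> {p \<in> (SIGMA n:UNIV. M n). e \<le> \<bar>G p x - f x\<bar>}"
        show "p \<in> (SIGMA n:{..<N}. M n) \<union> {p \<in> (SIGMA n:UNIV. M n). x \<notin> u (fst p) (snd p)}"
        proof (cases "fst p < N")
          case True then show ?thesis using p by auto
        next
          case False
          then have "1 / (real (fst p) + 1) \<le> inverse (real N)"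
            using N(1) by (simp add: divide_simps)
          then have "1 / (real (fst p) + 1) < e" using N(2) by linarith
          then have "x \<notin> u (fst p) (snd p)" using p unfolding u_def G_def by auto
          then show ?thesis using p by auto
        qed
      qed
      moreover have "finite (SIGMA n:{..<N}. M n)" using M1 by (intro finite_SigmaI) auto
      moreover have "finite {p \<in> (SIGMA n:UNIV. M n). x \<notin> u (fst p) (snd p)}" using M3 x by blast
      ultimately show "finite {p \<in> (SIGMA n:UNIV. M n). e \<le> \<bar>G p x - f x\<bar>}"
        by (meson finite_UnI finite_subset)
    qed
    then have "(\<Union>n. g n ` M n) \<in> Gamma_pt (Cp X) f" unfolding UB .
    moreover have "\<forall>n. finite (g n ` M n) \<and> g n ` M n \<subseteq> A n"
    proof
      fix n
      show "finite (g n ` M n) \<and> g n ` M n \<subseteq> A n" using M1 g[of n] by auto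
    qed
    ultimately show "\<exists>B. (\<forall>n. finite (B n) \<and> B n \<subseteq> A n) \<and> (\<Union>n. B n) \<in> Gamma_pt (Cp X) f"
      by (intro exI[of _ "\<lambda>n. g n ` M n"]) simp
  qed
qed

lemma P1_P2:
  assumes P1: "\<forall>f\<in>topspace (Cp X). Sfin (Gamma_pt (Cp X) f) (Gamma_pt (Cp X) f)"
  shows "Sfin (Gamma_F X) (Gamma_open X)"
  unfolding Sfin_def
proof (intro allI impI)
  fix A :: "nat \<Rightarrow> 'a set set" assume A: "\<forall>n. A n \<in> Gamma_F X"
  obtain u z where uz: "\<forall>n. (\<forall>m. u n m \<in> A n) \<and> seqF X (u n) (z n)"
    using GammaF_seqs[OF A] by blast
  have sn: "seqF X (u n) (z n)" for n using uz by blast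
  have exh: "\<exists>h. continuous_map X (top_of_set {0..1::real}) h \<and> (\<forall>x\<in>z n m. h x = 0) \<and>
             (\<forall>x\<in>topspace X. h x = 1 \<longleftrightarrow> x \<notin> u n m)" for n m
    using sn[of n] unfolding seqF_def by (intro separating_fn) auto
  define H where "H n m = (SOME h. continuous_map X (top_of_set {0..1::real}) h \<and> (\<forall>x\<in>z n m. h x = 0) \<and>
             (\<forall>x\<in>topspace X. h x = 1 \<longleftrightarrow> x \<notin> u n m))" for n m
  have H: "continuous_map X (top_of_set {0..1::real}) (H n m) \<and> (\<forall>x\<in>z n m. H n m x = 0) \<and>
             (\<forall>x\<in>topspace X. H n m x = 1 \<longleftrightarrow> x \<notin> u n m)" for n m
    unfolding H_def using exh[of n m] by (rule someI_ex)
  define HH where "HH n m = restrict (H n m) (topspace X)" for n m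
  define f0 :: "'a \<Rightarrow> real" where "f0 = restrict (\<lambda>x. 0) (topspace X)"
  have f0: "f0 \<in> topspace (Cp X)" unfolding Cp_top f0_def by simp
  have HHC: "HH n m \<in> topspace (Cp X)" for n m
  proof -
    have "continuous_map X euclideanreal (H n m)"
      using H[of n m] by (simp add: continuous_map_in_subtopology)
    then show ?thesis unfolding Cp_top HH_def by simp
  qed
  have usub: "u n m \<subseteq> topspace X" "u n m \<noteq> topspace X" for n m
    using sn[of n] unfolding seqF_def by (auto dest: cozero_subset)
  have rngG: "range (HH n) \<in> Gamma_pt (Cp X) f0" for n
  proof (rule CpGamma_from_index[OF f0])
    show "infinite (UNIV :: nat set)" by simp
    fix m
    obtain x where x: "x \<in> topspace X" "x \<notin> u n m" using usub[of n m] by blast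
    then have "HH n m x = 1" using H[of n m] unfolding HH_def by simp
    moreover have "f0 x = 0" using x unfolding f0_def by simp
    ultimately have "HH n m \<noteq> f0" by auto
    then show "HH n m \<in> topspace (Cp X) \<and> HH n m \<noteq> f0" using HHC by blast
  next
    fix x e assume x: "x \<in> topspace X" and e: "(e::real) > 0"
    have "{m \<in> UNIV. e \<le> \<bar>HH n m x - f0 x\<bar>} \<subseteq> {m. x \<notin> z n m}"
      using H x e unfolding HH_def f0_def by auto
    moreover have "finite {m. x \<notin> z n m}" using sn[of n] x unfolding seqF_def by blast
    ultimately show "finite {m \<in> UNIV. e \<le> \<bar>HH n m x - f0 x\<bar>}" using finite_subset by blast
  qed
  have S: "(\<forall>n. AA n \<in> Gamma_pt (Cp X) f0) \<longrightarrow>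
      (\<exists>B. (\<forall>n. finite (B n) \<and> B n \<subseteq> AA n) \<and> (\<Union>n. B n) \<in> Gamma_pt (Cp X) f0)"
    for AA :: "nat \<Rightarrow> ('a \<Rightarrow> real) set"
  proof -
    have "Sfin (Gamma_pt (Cp X) f0) (Gamma_pt (Cp X) f0)" using P1 f0 by blast
    then show ?thesis unfolding Sfin_def by (rule spec)
  qed
  obtain B where B1: "\<forall>n. finite (B n) \<and> B n \<subseteq> range (HH n)"
    and B2: "(\<Union>n. B n) \<in> Gamma_pt (Cp X) f0"
    using S[of "\<lambda>n. range (HH n)"] rngG by blast
  define s where "s g = {x \<in> topspace X. g x \<noteq> 1}" for g :: "'a \<Rightarrow> real"
  have sHH: "s (HH n m) = u n m" for n m
    using H[of n m] usub[of n m] unfolding s_def HH_def by auto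
  have sB: "\<exists>m. s g = u n m" if gB: "g \<in> B n" for g n
  proof -
    have "g \<in> range (HH n)" using B1 gB by blast
    then obtain m where "g = HH n m" by blast
    then show ?thesis using sHH by blast
  qed
  have BG: "(\<Union>n. B n) \<subseteq> topspace (Cp X) \<and> infinite (\<Union>n. B n) \<and> f0 \<notin> (\<Union>n. B n) \<and>
           (\<forall>x\<in>topspace X. \<forall>e>0. finite {g\<in>(\<Union>n. B n). e \<le> \<bar>g x - f0 x\<bar>})"
    using Gamma_pt_Cp[OF f0, THEN iffD1, OF B2] .
  have gam: "gamma_cover X (s ` (\<Union>n. B n))"
  proof (rule gamma_from_index)
    show "infinite (\<Union>n. B n)" using BG by blast
    fix g assume "g \<in> (\<Union>n. B n)"
    then obtain n where "g \<in> B n" by blast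
    then obtain m where "s g = u n m" using sB by blast
    then show "s g \<subseteq> topspace X \<and> s g \<noteq> topspace X" using usub by auto
  next
    fix x assume x: "x \<in> topspace X"
    have "{g \<in> (\<Union>n. B n). x \<notin> s g} \<subseteq> {g\<in>(\<Union>n. B n). 1 \<le> \<bar>g x - f0 x\<bar>}"
      using x unfolding s_def f0_def by auto
    moreover have "finite {g\<in>(\<Union>n. B n). 1 \<le> \<bar>g x - f0 x\<bar>}" using BG x by simp
    ultimately show "finite {g \<in> (\<Union>n. B n). x \<notin> s g}" using finite_subset by blast
  qed
  have opn: "\<forall>U\<in>s ` (\<Union>n. B n). openin X U"
  proof
    fix U assume "U \<in> s ` (\<Union>n. B n)"
    then obtain n g where "g \<in> B n" "U = s g" by blast
    then obtain m where "U = u n m" using sB by blast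
    then show "openin X U" using sn[of n] unfolding seqF_def by (auto intro: cozero_open)
  qed
  have eq: "(\<Union>n. s ` B n) = s ` (\<Union>n. B n)" by auto
  have "(\<Union>n. s ` B n) \<in> Gamma_open X" unfolding eq Gamma_open_def using gam opn by blast
  moreover have "\<forall>n. finite (s ` B n) \<and> s ` B n \<subseteq> A n"
  proof
    fix n
    have "s ` B n \<subseteq> A n"
    proof
      fix U assume "U \<in> s ` B n"
      then obtain g where "g \<in> B n" "U = s g" by blast
      then obtain m where "U = u n m" using sB by blast
      then show "U \<in> A n" using uz by blast
    qed
    then show "finite (s ` B n) \<and> s ` B n \<subseteq> A n" using B1 by blast
  qed
  ultimately show "\<exists>B. (\<forall>n. finite (B n) \<and> B n \<subseteq> A n) \<and> (\<Union>n. B n) \<in> Gamma_open X"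
    by (intro exI[of _ "\<lambda>n. s ` B n"]) simp
qed

section \<open>Clopen covers and strong zero-dimensionality\<close>

lemma clopen_GammaF:
  assumes "U \<in> Gamma_cl X"
  shows "U \<in> Gamma_F X"
proof -
  have g: "gamma_cover X U" and c: "\<forall>W\<in>U. openin X W \<and> closedin X W"
    using assms unfolding Gamma_cl_def by auto
  have zc: "\<forall>W\<in>U. zero_set X W \<and> cozero_set X W" using c clopen_zero_cozero by blast
  have "(\<forall>W\<in>U. zero_set X (id W) \<and> id W \<subseteq> W) \<and> gamma_cover X (id ` U)" using zc g by simp
  then show ?thesis unfolding Gamma_F_def using g zc by blast
qed

lemma P2_P3cl:
  assumes P2: "Sfin (Gamma_F X) (Gamma_open X)"
  shows "Sfin (Gamma_cl X) (Gamma_cl X)"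
  unfolding Sfin_def
proof (intro allI impI)
  fix A :: "nat \<Rightarrow> 'a set set" assume A: "\<forall>n. A n \<in> Gamma_cl X"
  have AF: "\<forall>n. A n \<in> Gamma_F X" using A clopen_GammaF by blast
  from P2 have "(\<forall>n. A n \<in> Gamma_F X) \<longrightarrow>
      (\<exists>B. (\<forall>n. finite (B n) \<and> B n \<subseteq> A n) \<and> (\<Union>n. B n) \<in> Gamma_open X)"
    unfolding Sfin_def by (rule spec)
  then obtain B where B1: "\<forall>n. finite (B n) \<and> B n \<subseteq> A n" and B2: "(\<Union>n. B n) \<in> Gamma_open X"
    using AF by blast
  have "\<forall>U\<in>(\<Union>n. B n). openin X U \<and> closedin X U"
  proof
    fix U assume "U \<in> (\<Union>n. B n)"
    then obtain n where "U \<in> A n" using B1 by blast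
    then show "openin X U \<and> closedin X U" using A unfolding Gamma_cl_def by blast
  qed
  then have "(\<Union>n. B n) \<in> Gamma_cl X" using B2 unfolding Gamma_open_def Gamma_cl_def by blast
  then show "\<exists>B. (\<forall>n. finite (B n) \<and> B n \<subseteq> A n) \<and> (\<Union>n. B n) \<in> Gamma_cl X"
    using B1 by (intro exI[of _ B]) simp
qed

lemma P3_P2:
  assumes P3: "Sfin (Gamma_cl X) (Gamma_cl X)" and szd: "strongly_zero_dimensional X"
  shows "Sfin (Gamma_F X) (Gamma_open X)"
  unfolding Sfin_def
proof (intro allI impI)
  fix A :: "nat \<Rightarrow> 'a set set" assume A: "\<forall>n. A n \<in> Gamma_F X"
  obtain u z where uz: "\<forall>n. (\<forall>m. u n m \<in> A n) \<and> seqF X (u n) (z n)"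
    using GammaF_seqs[OF A] by blast
  have sn: "seqF X (u n) (z n)" for n using uz by blast
  have usub: "u n m \<subseteq> topspace X" "u n m \<noteq> topspace X" "z n m \<subseteq> u n m" for n m
    using sn[of n] unfolding seqF_def by (auto dest: cozero_subset)
  have exC: "\<exists>C. openin X C \<and> closedin X C \<and> z n m \<subseteq> C \<and> C \<subseteq> u n m" for n m
  proof -
    obtain h where h: "continuous_map X (top_of_set {0..1::real}) h" "\<forall>x\<in>z n m. h x = 0"
      "\<forall>x\<in>topspace X. h x = 1 \<longleftrightarrow> x \<notin> u n m"
      using separating_fn[of X "u n m" "z n m"] sn[of n] unfolding seqF_def by blast
    have "z n m \<subseteq> topspace X" using usub by blast
    moreover have "topspace X - u n m \<subseteq> topspace X" by blast
    moreover have "\<exists>f. continuous_map X (top_of_set {0..1::real}) f \<and> f ` z n m \<subseteq> {0} \<and>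
        f ` (topspace X - u n m) \<subseteq> {1}"
      using h by (intro exI[of _ h]) auto
    ultimately obtain C where C: "openin X C" "closedin X C" "z n m \<subseteq> C" "C \<inter> (topspace X - u n m) = {}"
      using szd[unfolded strongly_zero_dimensional_def, rule_format, of "z n m" "topspace X - u n m"] by blast
    have "C \<subseteq> topspace X" using C(2) closedin_subset by blast
    then have "C \<subseteq> u n m" using C(4) by blast
    then show ?thesis using C by blast
  qed
  define CC where "CC n m = (SOME C. openin X C \<and> closedin X C \<and> z n m \<subseteq> C \<and> C \<subseteq> u n m)" for n m
  have CC: "openin X (CC n m) \<and> closedin X (CC n m) \<and> z n m \<subseteq> CC n m \<and> CC n m \<subseteq> u n m" for n m
    unfolding CC_def using exC[of n m] by (rule someI_ex)
  have rC: "range (CC n) \<in> Gamma_cl X" for n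
  proof -
    have "gamma_cover X (range (CC n))"
    proof (rule gamma_from_index)
      show "infinite (UNIV :: nat set)" by simp
      fix m show "CC n m \<subseteq> topspace X \<and> CC n m \<noteq> topspace X"
        using CC[of n m] usub[of n m] by blast
    next
      fix x assume x: "x \<in> topspace X"
      have "{m \<in> UNIV. x \<notin> CC n m} \<subseteq> {m. x \<notin> z n m}" using CC by blast
      moreover have "finite {m. x \<notin> z n m}" using sn[of n] x unfolding seqF_def by blast
      ultimately show "finite {m \<in> UNIV. x \<notin> CC n m}" using finite_subset by blast
    qed
    then show ?thesis unfolding Gamma_cl_def using CC by blast
  qed
  from P3 have "(\<forall>n. range (CC n) \<in> Gamma_cl X) \<longrightarrow>
      (\<exists>B. (\<forall>n. finite (B n) \<and> B n \<subseteq> range (CC n)) \<and> (\<Union>n. B n) \<in> Gamma_cl X)"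
    unfolding Sfin_def by (rule spec)
  then obtain B where B1: "\<forall>n. finite (B n) \<and> B n \<subseteq> range (CC n)" and B2: "(\<Union>n. B n) \<in> Gamma_cl X"
    using rC by blast
  have "gamma_cover X (\<Union>n. B n)" using B2 unfolding Gamma_cl_def by blast
  then obtain B' where B'1: "\<forall>n. B' n \<subseteq> B n" and B'2: "infinite (SIGMA n:UNIV. B' n)"
    and B'3: "\<forall>x\<in>topspace X. finite {p \<in> (SIGMA n:UNIV. B' n). x \<notin> snd p}"
    using dedup[of B X] B1 by blast
  define c where "c n W = (SOME m. CC n m = W)" for n W
  have c: "CC n (c n W) = W" if "W \<in> B' n" for n W
  proof -
    have "W \<in> range (CC n)" using that B1 B'1 by blast
    then show ?thesis unfolding c_def by (metis (mono_tags, lifting) imageE someI_ex)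
  qed
  define t where "t p = u (fst p) (c (fst p) (snd p))" for p
  have gam: "gamma_cover X (t ` (SIGMA n:UNIV. B' n))"
  proof (rule gamma_from_index[OF B'2])
    fix p show "t p \<subseteq> topspace X \<and> t p \<noteq> topspace X" unfolding t_def using usub by blast
  next
    fix x assume x: "x \<in> topspace X"
    have "{p \<in> (SIGMA n:UNIV. B' n). x \<notin> t p} \<subseteq> {p \<in> (SIGMA n:UNIV. B' n). x \<notin> snd p}"
    proof
      fix p assume p: "p \<in> {p \<in> (SIGMA n:UNIV. B' n). x \<notin> t p}"
      then have "snd p \<in> B' (fst p)" by auto
      then have "snd p = CC (fst p) (c (fst p) (snd p))" using c by simp
      also have "\<dots> \<subseteq> t p" unfolding t_def using CC by blast
      finally show "p \<in> {p \<in> (SIGMA n:UNIV. B' n). x \<notin> snd p}" using p by blast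
    qed
    then show "finite {p \<in> (SIGMA n:UNIV. B' n). x \<notin> t p}" using B'3 x finite_subset by blast
  qed
  define D where "D n = (\<lambda>W. u n (c n W)) ` B' n" for n
  have eq: "(\<Union>n. D n) = t ` (SIGMA n:UNIV. B' n)"
  proof
    show "(\<Union>n. D n) \<subseteq> t ` (SIGMA n:UNIV. B' n)"
    proof
      fix U assume "U \<in> (\<Union>n. D n)"
      then obtain n W where "W \<in> B' n" "U = u n (c n W)" unfolding D_def by blast
      then show "U \<in> t ` (SIGMA n:UNIV. B' n)" unfolding t_def by (intro image_eqI[of _ _ "(n, W)"]) auto
    qed
    show "t ` (SIGMA n:UNIV. B' n) \<subseteq> (\<Union>n. D n)" unfolding t_def D_def by auto
  qed
  have opn: "\<forall>U\<in>t ` (SIGMA n:UNIV. B' n). openin X U"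
    unfolding t_def using sn unfolding seqF_def by (auto intro: cozero_open)
  have "(\<Union>n. D n) \<in> Gamma_open X" unfolding eq Gamma_open_def using gam opn by blast
  moreover have "\<forall>n. finite (D n) \<and> D n \<subseteq> A n"
  proof
    fix n
    have "finite (B' n)" using B1 B'1 by (meson finite_subset)
    moreover have "D n \<subseteq> A n" unfolding D_def using uz by blast
    ultimately show "finite (D n) \<and> D n \<subseteq> A n" unfolding D_def by blast
  qed
  ultimately show "\<exists>B. (\<forall>n. finite (B n) \<and> B n \<subseteq> A n) \<and> (\<Union>n. B n) \<in> Gamma_open X"
    by (intro exI[of _ D]) simp
qed

definition dya :: "nat \<Rightarrow> real" where
  "dya n = real (snd (prod_decode n) mod 2 ^ fst (prod_decode n)) / 2 ^ fst (prod_decode n)"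

definition dyr :: "nat \<Rightarrow> real" where
  "dyr n = 1 / 2 ^ fst (prod_decode n)"

lemma dy_props: "0 \<le> dya n" "0 < dyr n" "dya n + dyr n \<le> 1"
proof -
  obtain L j where Lj: "prod_decode n = (L, j)" by fastforce
  show "0 \<le> dya n" "0 < dyr n" unfolding dya_def dyr_def by auto
  have "j mod 2 ^ L < (2::nat) ^ L" by simp
  then have "j mod 2 ^ L + 1 \<le> (2::nat) ^ L" by linarith
  then have "real (j mod 2 ^ L + 1) \<le> real ((2::nat) ^ L)" by (simp only: of_nat_le_iff)
  then have "real (j mod 2 ^ L) + 1 \<le> (2::real) ^ L" by simp
  then show "dya n + dyr n \<le> 1" unfolding dya_def dyr_def Lj
    by (simp add: divide_simps)
qed

lemma dy_dense:
  assumes "0 \<le> p" "p < q" "q \<le> 1"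
  shows "\<exists>n\<ge>N. p \<le> dya n \<and> dya n + dyr n \<le> q"
proof -
  have h: "(q - p) / 2 > 0" using assms by simp
  have "\<exists>n. (1/2::real) ^ n < (q - p) / 2" by (rule real_arch_pow_inv[OF h]) simp
  then obtain L0 where L0: "(1/2::real) ^ L0 < (q - p) / 2" by blast
  define L where "L = max N L0"
  define D where "D = (2::real) ^ L"
  have Dpos: "D > 0" unfolding D_def by simp
  have "(1/2::real) ^ L \<le> (1/2) ^ L0" unfolding L_def by (rule power_decreasing) auto
  then have invD: "1 / D < (q - p) / 2" using L0 unfolding D_def by (simp add: power_one_over)
  define j where "j = nat \<lceil>p * D\<rceil>"
  have jr: "real j = of_int \<lceil>p * D\<rceil>" unfolding j_def using assms Dpos by simp
  have j1: "p * D \<le> real j" using jr by linarith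
  have j2: "real j < p * D + 1" using jr by linarith
  have "real j + 1 < p * D + 2" using j2 by linarith
  also have "\<dots> = (p + 2 / D) * D" using Dpos by (simp add: field_simps)
  also have "\<dots> < q * D" using invD Dpos by (intro mult_strict_right_mono) (auto simp: field_simps)
  finally have jq: "real j + 1 < q * D" .
  moreover have "q * D \<le> 1 * D" using assms Dpos by (intro mult_right_mono) auto
  ultimately have "real j + 1 < D" by linarith
  then have "real j < (2::real) ^ L" unfolding D_def by linarith
  then have jL: "j < 2 ^ L"
  proof -
    assume lt: "real j < (2::real) ^ L"
    show "j < 2 ^ L"
    proof (rule ccontr)
      assume "\<not> j < 2 ^ L"
      then have "2 ^ L \<le> j" by simp
      then have "real ((2::nat) ^ L) \<le> real j" by (simp only: of_nat_le_iff)
      then show False using lt by simp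
    qed
  qed
  define n where "n = prod_encode (L, j)"
  have dec: "prod_decode n = (L, j)" unfolding n_def by simp
  have "N \<le> L" unfolding L_def by simp
  also have "L \<le> n" unfolding n_def by (rule le_prod_encode_1)
  finally have Nn: "N \<le> n" .
  have da: "dya n = real j / D" unfolding dya_def dec D_def using jL by simp
  have dr: "dyr n = 1 / D" unfolding dyr_def dec D_def by simp
  have "p \<le> real j / D" using j1 Dpos by (simp add: field_simps)
  moreover have "real j / D + 1 / D \<le> q" using jq Dpos by (simp add: field_simps)
  ultimately show ?thesis using Nn da dr by auto
qed

lemma half_pow_facts:
  fixes m n :: nat
  shows "(0::real) < (1/2) ^ m" "(1/2::real) ^ m \<le> 1" "(1/2::real) ^ Suc m = (1/2) ^ m / 2"
    and "m \<le> n \<Longrightarrow> (1/2::real) ^ n \<le> (1/2) ^ m"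
proof -
  show "(0::real) < (1/2) ^ m" by simp
  show "(1/2::real) ^ m \<le> 1" by (rule power_le_one) auto
  show "(1/2::real) ^ Suc m = (1/2) ^ m / 2" by simp
  show "m \<le> n \<Longrightarrow> (1/2::real) ^ n \<le> (1/2) ^ m" by (rule power_decreasing) auto
qed

lemma P4seq_szd:
  assumes P: "P4seq X"
  shows "strongly_zero_dimensional X"
  unfolding strongly_zero_dimensional_def
proof (intro allI impI)
  fix AA BB :: "'a set"
  assume H: "AA \<subseteq> topspace X \<and> BB \<subseteq> topspace X \<and>
        (\<exists>f. continuous_map X (top_of_set {0..1::real}) f \<and> f ` AA \<subseteq> {0} \<and> f ` BB \<subseteq> {1})"
  then obtain f where f: "continuous_map X (top_of_set {0..1::real}) f" "f ` AA \<subseteq> {0}" "f ` BB \<subseteq> {1}"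
    by blast
  have fc: "continuous_map X euclideanreal f" using f(1) by (simp add: continuous_map_in_subtopology)
  have "\<exists>c. 0 < c \<and> c < 1 \<and> c \<notin> f ` topspace X"
  proof (rule ccontr)
    assume "\<not> (\<exists>c. 0 < c \<and> c < 1 \<and> c \<notin> f ` topspace X)"
    then have surj: "\<And>c. 0 < c \<Longrightarrow> c < 1 \<Longrightarrow> c \<in> f ` topspace X" by blast
    define q :: "nat \<Rightarrow> real" where "q m = (1/2) ^ m" for m
    have qpos: "q m > 0" for m unfolding q_def by simp
    have qle: "q m \<le> 1" for m unfolding q_def using half_pow_facts(2) .
    have qSuc: "q (Suc m) = q m / 2" for m unfolding q_def by simp
    have rq: "dyr k * q (Suc m) < dyr k * q m" for k m
      using dy_props(2)[of k] qpos[of m] unfolding qSuc by (intro mult_strict_left_mono) auto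
    have rq1: "dyr k * q m \<le> dyr k" for k m
      using dy_props(2)[of k] qle[of m] by (simp add: mult_left_le)
    have rqpos: "dyr k * q m > 0" for k m using dy_props(2)[of k] qpos[of m] by simp
    define lo where "lo k m = dya k + dyr k * q (Suc (Suc m))" for k m
    define hi where "hi k m = dya k + dyr k * q (Suc m)" for k m
    define lo' where "lo' k m = dya k + dyr k * q (Suc (Suc (Suc m)))" for k m
    define hi' where "hi' k m = dya k + dyr k * q m" for k m
    have o1: "lo' k m < lo k m" for k m unfolding lo'_def lo_def using rq[of k "Suc (Suc m)"] by simp
    have o2: "lo k m < hi k m" for k m unfolding hi_def lo_def using rq[of k "Suc m"] by simp
    have o3: "hi k m < hi' k m" for k m unfolding hi_def hi'_def using rq[of k m] by simp
    have o4: "0 < lo k m" for k m unfolding lo_def using dy_props(1)[of k] rqpos[of k "Suc (Suc m)"] by simp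
    have o5: "hi k m < 1" for k m
    proof -
      have "dyr k * q (Suc m) < dyr k" using rq[of k m] rq1[of k m] by linarith
      then show ?thesis unfolding hi_def using dy_props(3)[of k] by simp
    qed
    have o6: "dya k \<le> lo k m" for k m unfolding lo_def using rqpos[of k "Suc (Suc m)"] by simp
    have o7: "hi k m \<le> dya k + dyr k" for k m unfolding hi_def using rq1[of k "Suc m"] by simp
    define u where "u k m = {x \<in> topspace X. f x < lo k m \<or> hi k m < f x}" for k m
    define z where "z k m = {x \<in> topspace X. f x \<le> lo' k m \<or> hi' k m \<le> f x}" for k m
    have sk: "seqF X (u k) (z k)" for k
      unfolding seqF_def
    proof (intro conjI allI ballI)
      fix m
      show "cozero_set X (u k m)" unfolding u_def by (rule cozero_out[OF fc])
      show "zero_set X (z k m)" unfolding z_def by (rule zero_out[OF fc])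
      show "z k m \<subseteq> u k m" unfolding z_def u_def using o1[of k m] o3[of k m] by auto
      have "lo k m \<in> f ` topspace X" using surj o4[of k m] o2[of k m] o5[of k m] by simp
      then obtain x where x: "x \<in> topspace X" "f x = lo k m" by (metis imageE)
      then have "x \<notin> u k m" unfolding u_def using o2[of k m] by auto
      then show "u k m \<noteq> topspace X" using x by blast
    next
      fix x assume x: "x \<in> topspace X"
      show "finite {m. x \<notin> z k m}"
      proof (cases "f x \<le> dya k")
        case True
        have "{m. x \<notin> z k m} = {}"
        proof -
          have "x \<in> z k m" for m
          proof -
            have "dya k \<le> lo' k m" unfolding lo'_def using rqpos[of k "Suc (Suc (Suc m))"] by simp
            then show ?thesis unfolding z_def using x True by auto
          qed
          then show ?thesis by blast
        qed
        then show ?thesis by simp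
      next
        case False
        define d where "d = f x - dya k"
        have dpos: "d > 0" unfolding d_def using False by simp
        have "d / dyr k > 0" using dpos dy_props(2)[of k] by simp
        then have "\<exists>L. (1/2::real) ^ L < d / dyr k" by (rule real_arch_pow_inv) simp
        then obtain L where L: "q L < d / dyr k" unfolding q_def by blast
        have "{m. x \<notin> z k m} \<subseteq> {..<L}"
        proof
          fix m assume m: "m \<in> {m. x \<notin> z k m}"
          show "m \<in> {..<L}"
          proof (rule ccontr)
            assume "m \<notin> {..<L}"
            then have "L \<le> m" by simp
            then have "q m \<le> q L" unfolding q_def by (rule half_pow_facts(4))
            then have "dyr k * q m \<le> dyr k * q L" using dy_props(2)[of k] by (simp add: mult_left_mono)
            also have "dyr k * q L < d" using L dy_props(2)[of k] by (simp add: field_simps)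
            finally have "hi' k m < f x" unfolding hi'_def d_def by simp
            then have "x \<in> z k m" unfolding z_def using x by auto
            then show False using m by blast
          qed
        qed
        then show ?thesis using finite_subset by blast
      qed
    qed
    have PP: "\<exists>m. \<forall>x\<in>topspace X. finite {n. x \<notin> uu n (m n)}"
      if "\<forall>n. seqF X (uu n) (zz n)" for uu zz :: "nat \<Rightarrow> nat \<Rightarrow> 'a set"
      using P that unfolding P4seq_def by blast
    have "\<forall>k. seqF X (u k) (z k)" using sk by blast
    from PP[OF this] obtain mm where mm: "\<forall>x\<in>topspace X. finite {n. x \<notin> u n (mm n)}" by blast
    have exn: "\<exists>k'. k < k' \<and> lo k (mm k) \<le> dya k' \<and> dya k' + dyr k' \<le> hi k (mm k)" for k
    proof -
      have "\<exists>n\<ge>Suc k. lo k (mm k) \<le> dya n \<and> dya n + dyr n \<le> hi k (mm k)"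
        using o4[of k "mm k"] o2[of k "mm k"] o5[of k "mm k"] by (intro dy_dense) auto
      then show ?thesis by (metis Suc_le_eq)
    qed
    define nxt where "nxt k = (SOME k'. k < k' \<and> lo k (mm k) \<le> dya k' \<and> dya k' + dyr k' \<le> hi k (mm k))" for k
    have nxt: "k < nxt k \<and> lo k (mm k) \<le> dya (nxt k) \<and> dya (nxt k) + dyr (nxt k) \<le> hi k (mm k)" for k
      unfolding nxt_def using exn[of k] by (rule someI_ex)
    define kk where "kk j = (nxt ^^ j) 0" for j
    have kkS: "kk (Suc j) = nxt (kk j)" for j unfolding kk_def by simp
    define K where "K j = {lo (kk j) (mm (kk j)) .. hi (kk j) (mm (kk j))}" for j
    have Kstep: "K (Suc j) \<subseteq> K j" for j
    proof -
      let ?k = "kk j" and ?k' = "kk (Suc j)"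
      have "lo ?k (mm ?k) \<le> lo ?k' (mm ?k')"
        using nxt[of ?k] o6[of ?k' "mm ?k'"] unfolding kkS by linarith
      moreover have "hi ?k' (mm ?k') \<le> hi ?k (mm ?k)"
        using nxt[of ?k] o7[of ?k' "mm ?k'"] unfolding kkS by linarith
      ultimately show ?thesis unfolding K_def by auto
    qed
    have Kmono: "m \<le> n \<Longrightarrow> K n \<subseteq> K m" for m n
      by (rule lift_Suc_antimono_le[of K]) (use Kstep in auto)
    have "\<Inter> (range K) \<noteq> {}"
    proof (rule compact_nest)
      show "compact (K n)" for n unfolding K_def by simp
      show "K n \<noteq> {}" for n unfolding K_def using o2 by (simp add: less_imp_le)
      show "m \<le> n \<Longrightarrow> K n \<subseteq> K m" for m n by (rule Kmono)
    qed
    then obtain y where y: "y \<in> \<Inter> (range K)" by blast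
    have yK: "y \<in> K j" for j using y by blast
    have "0 < y" "y < 1"
      using yK[of 0] o4[of "kk 0" "mm (kk 0)"] o5[of "kk 0" "mm (kk 0)"] unfolding K_def by auto
    then have "y \<in> f ` topspace X" using surj by blast
    then obtain x where x: "x \<in> topspace X" "f x = y" by (metis imageE)
    have "range kk \<subseteq> {n. x \<notin> u n (mm n)}"
    proof
      fix k assume "k \<in> range kk"
      then obtain j where j: "k = kk j" by blast
      have "f x \<in> K j" using yK x by simp
      then show "k \<in> {n. x \<notin> u n (mm n)}" unfolding K_def u_def j by auto
    qed
    moreover have "strict_mono kk"
      unfolding strict_mono_Suc_iff using nxt kkS by simp
    then have "infinite (range kk)" using range_inj_infinite strict_mono_imp_inj_on by blast
    ultimately show False using mm x finite_subset by blast
  qed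
  then obtain c where c: "0 < c" "c < 1" "c \<notin> f ` topspace X" by blast
  define C where "C = {x \<in> topspace X. f x < c}"
  have "openin X {x \<in> topspace X. f x \<in> {..<c}}"
    by (rule openin_continuous_map_preimage[OF fc]) simp
  then have oC: "openin X C" unfolding C_def by simp
  have "closedin X {x \<in> topspace X. f x \<in> {..c}}"
    by (rule closedin_continuous_map_preimage[OF fc]) simp
  moreover have "{x \<in> topspace X. f x \<in> {..c}} = C" unfolding C_def using c(3) by force
  ultimately have cC: "closedin X C" by simp
  have "AA \<subseteq> C" unfolding C_def using H f(2) c(1) by auto
  moreover have "C \<inter> BB = {}" unfolding C_def using f(3) c(2) by fastforce
  ultimately show "\<exists>C. openin X C \<and> closedin X C \<and> AA \<subseteq> C \<and> C \<inter> BB = {}"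
    using oC cC by (intro exI[of _ C]) simp
qed

theorem mainTheorem11:
  fixes X :: "'a topology"
  assumes "tychonoff_space X"
  shows "((\<forall>f \<in> topspace (Cp X). Sfin (Gamma_pt (Cp X) f) (Gamma_pt (Cp X) f))
            \<longleftrightarrow> Sfin (Gamma_F X) (Gamma_open X))
       \<and> (Sfin (Gamma_F X) (Gamma_open X)
            \<longleftrightarrow> Sfin (Gamma_cl X) (Gamma_cl X) \<and> strongly_zero_dimensional X)
       \<and> (Sfin (Gamma_F X) (Gamma_open X) \<longleftrightarrow> S1 (Gamma_F X) (Gamma_open X))"
proof -
  have a: "Sfin (Gamma_F X) (Gamma_open X) \<Longrightarrow> P4seq X"
    using P2_P2seq P2seq_P4seq by blast
  have b: "Sfin (Gamma_F X) (Gamma_open X) \<Longrightarrow>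
      (\<forall>f \<in> topspace (Cp X). Sfin (Gamma_pt (Cp X) f) (Gamma_pt (Cp X) f))"
    using P2_P2seq P2seq_P2seq' P2seq'_P1 by blast
  show ?thesis
    using a b P1_P2 P2_P3cl P4seq_szd P3_P2 P4seq_S1 S1_Sfin by blast
qed

end
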